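(* Let $n\geq1$ be an integer, let $R$ be a commutative ring in which $(n-1)!$ is invertible, and let $M$ be an $R$-module. Then the $R$-module $\Gamma^n_R(M)$ is generated by the pure symbols $[x]_n$, $x\in M$. Furthermore, for every submodule $N\subset M$, the kernel of the natural reduction $\rho:\Gamma^n_R(M)\to\Gamma^n_R(M/N)$ is generated (as an $R$-module) by the elements $[x+y]_n-[x]_n$ for $x\in M$ and $y\in N$.
   Context: $\Gamma^n_R(M)$ denotes the $n$-th divided power of the $R$-module $M$ (degree-$n$ part of the divided power algebra), with $[x]_n$ the $n$-th divided power of $x$. *)

theory Defs
  imports Complex_Main "HOL-Library.Multiset" "HOL-Library.Poly_Mapping"
begin

text \<open>The ring A below is the
polynomial ring over R (type 'a) in the symbols X(k,i), k a point of the module,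
i a natural number: a monomial is a finite multiset of symbols.  The divided power
algebra is A modulo the ideal generated by the standard relations; its degree-n
part is (A_n) / (I \<inter> A_n), where A_n is spanned by monomials of weight n.\<close>

type_synonym ('k, 'a) dpoly = "('k \<times> nat) multiset \<Rightarrow>\<^sub>0 'a"

definition dsym :: "'k \<Rightarrow> nat \<Rightarrow> ('k, 'a::comm_ring_1) dpoly" where
  "dsym k i = Poly_Mapping.single {#(k, i)#} 1"

definition dconst :: "'a::comm_ring_1 \<Rightarrow> ('k, 'a) dpoly" where
  "dconst c = Poly_Mapping.single 0 c"

definition dscale :: "'a::comm_ring_1 \<Rightarrow> ('k, 'a) dpoly \<Rightarrow> ('k, 'a) dpoly" where
  "dscale c p = dconst c * p"

definition dweight :: "('k \<times> nat) multiset \<Rightarrow> nat" where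
  "dweight m = sum_mset (image_mset snd m)"

definition dhom :: "nat \<Rightarrow> ('k, 'a::comm_ring_1) dpoly set" where
  "dhom n = Modules.module.span dscale {Poly_Mapping.single m 1 | m. dweight m = n}"

text \<open>Defining relations of the divided power algebra of the module
(given by scale on the type 'b), with symbols indexed via q.  For q = id this is
Gamma(M); for q x = coset of x modulo N it is Gamma(M/N) (every element of M/N
is of the form q x and the module operations are computed on representatives).\<close>
definition drels :: "('a::comm_ring_1 \<Rightarrow> 'b::ab_group_add \<Rightarrow> 'b) \<Rightarrow> ('b \<Rightarrow> 'k)
                      \<Rightarrow> ('k, 'a) dpoly set" where
  "drels scale q =
     {dsym (q x) 0 - 1 | x. True}
   \<union> {dsym (q (scale c x)) k - dconst (c ^ k) * dsym (q x) k | c x k. True}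
   \<union> {dsym (q x) i * dsym (q x) j - of_nat ((i + j) choose i) * dsym (q x) (i + j) | x i j. True}
   \<union> {dsym (q (x + y)) k - (\<Sum>i\<le>k. dsym (q x) i * dsym (q y) (k - i)) | x y k. True}"

definition dideal :: "('a::comm_ring_1 \<Rightarrow> 'b::ab_group_add \<Rightarrow> 'b) \<Rightarrow> ('b \<Rightarrow> 'k)
                      \<Rightarrow> ('k, 'a) dpoly set" where
  "dideal scale q = Modules.module.span ((*) :: ('k, 'a) dpoly \<Rightarrow> _ \<Rightarrow> _) (drels scale q)"

definition dmap :: "('k \<Rightarrow> 'l) \<Rightarrow> ('k, 'a::comm_ring_1) dpoly \<Rightarrow> ('l, 'a) dpoly" where
  "dmap f p = (\<Sum>m\<in>Poly_Mapping.keys p.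
                 Poly_Mapping.single (image_mset (apfst f) m) (Poly_Mapping.lookup p m))"

definition coset :: "'b::ab_group_add set \<Rightarrow> 'b \<Rightarrow> 'b set" where
  "coset N x = (\<lambda>y. x + y) ` N"

end

theory Submission
  imports Defs "HOL-Computational_Algebra.Formal_Power_Series"
begin

unbundle fps_syntax


abbreviation mon :: "('k \<times> nat) multiset \<Rightarrow> ('k, 'a::comm_ring_1) dpoly" where
  "mon m \<equiv> Poly_Mapping.single m 1"

lemma dconst_mult: "dconst a * dconst b = dconst (a * b)"
  by (simp add: dconst_def mult_single)

lemma dconst_one: "dconst 1 = 1"
  by (simp add: dconst_def)

lemma dconst_add: "dconst (a + b) = dconst a + dconst b"
  by (simp add: dconst_def single_add)

lemma dscale_single: "dscale c (Poly_Mapping.single m d) = Poly_Mapping.single m (c * d)"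
  by (simp add: dscale_def dconst_def mult_single)

lemma module_dscale: "Modules.module (dscale :: 'a::comm_ring_1 \<Rightarrow> ('k, 'a) dpoly \<Rightarrow> _)"
proof
  fix a b :: 'a and x y :: "('k, 'a) dpoly"
  show "dscale a (x + y) = dscale a x + dscale a y" by (simp add: dscale_def distrib_left)
  show "dscale (a + b) x = dscale a x + dscale b x" by (simp add: dscale_def dconst_add distrib_right)
  show "dscale a (dscale b x) = dscale (a * b) x"
    by (simp add: dscale_def mult.assoc[symmetric] dconst_mult)
  show "dscale 1 x = x" by (simp add: dscale_def dconst_one)
qed

lemma module_mult: "Modules.module ((*) :: ('k, 'a::comm_ring_1) dpoly \<Rightarrow> _ \<Rightarrow> _)"
proof
  fix a b x y :: "('k, 'a) dpoly"
  show "a * (x + y) = a * x + a * y" by (rule distrib_left)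
  show "(a + b) * x = a * x + b * x" by (rule distrib_right)
  show "a * (b * x) = (a * b) * x" by (rule mult.assoc[symmetric])
  show "1 * x = x" by (rule mult_1_left)
qed

lemma dscale_of_nat: "dscale (of_nat c) p = of_nat c * p"
  by (simp add: dscale_def dconst_def)

lemma dweight_add_mset [simp]: "dweight (add_mset s m) = snd s + dweight m"
  unfolding dweight_def by simp
lemma dweight_add [simp]: "dweight (a + b) = dweight a + dweight b"
  unfolding dweight_def by simp
lemma dweight_empty [simp]: "dweight {#} = 0"
  unfolding dweight_def by simp
lemma dweight_image [simp]: "dweight (image_mset (apfst f) m) = dweight m"
  unfolding dweight_def by (induction m) auto

lemma poly_expand: "p = (\<Sum>m\<in>Poly_Mapping.keys p. Poly_Mapping.single m (Poly_Mapping.lookup p m))"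
proof (rule poly_mapping_eqI)
  fix k
  show "Poly_Mapping.lookup p k = Poly_Mapping.lookup (\<Sum>m\<in>Poly_Mapping.keys p. Poly_Mapping.single m (Poly_Mapping.lookup p m)) k"
  proof -
    have "Poly_Mapping.lookup (\<Sum>m\<in>Poly_Mapping.keys p. Poly_Mapping.single m (Poly_Mapping.lookup p m)) k
      = (\<Sum>m\<in>Poly_Mapping.keys p. (if m = k then Poly_Mapping.lookup p m else 0))"
      unfolding lookup_sum by (intro sum.cong refl) (simp add: lookup_single when_def)
    also have "\<dots> = (if k \<in> Poly_Mapping.keys p then Poly_Mapping.lookup p k else 0)"
      by (simp add: sum.delta')
    also have "\<dots> = Poly_Mapping.lookup p k"
      by (simp add: in_keys_iff)
    finally show ?thesis by (rule sym)
  qed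
qed

lemma dhom_iff: fixes p :: "('k, 'a::comm_ring_1) dpoly" shows "p \<in> dhom n \<longleftrightarrow> (\<forall>m\<in>Poly_Mapping.keys p. dweight m = n)"
proof
  interpret M: Modules.module dscale by (rule module_dscale)
  assume "p \<in> dhom n"
  then show "\<forall>m\<in>Poly_Mapping.keys p. dweight m = n"
    unfolding dhom_def
  proof (induction rule: M.span_induct)
    case step
    then show ?case by auto
  next
    case base
    show ?case
    proof (rule M.subspaceI)
      fix x y :: "('k, 'a) dpoly"
      assume "x \<in> {p. \<forall>m\<in>Poly_Mapping.keys p. dweight m = n}" "y \<in> {p. \<forall>m\<in>Poly_Mapping.keys p. dweight m = n}"
      then show "x + y \<in> {p. \<forall>m\<in>Poly_Mapping.keys p. dweight m = n}"
        using keys_add[of x y] by blast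
    next
      fix c x
      assume ax: "x \<in> {p :: ('k, 'a) dpoly. \<forall>m\<in>Poly_Mapping.keys p. dweight m = n}"
      show "dscale c x \<in> {p. \<forall>m\<in>Poly_Mapping.keys p. dweight m = n}"
      proof -
        have k: "Poly_Mapping.keys (dconst c :: ('k, 'a) dpoly) \<subseteq> {0}" by (simp add: dconst_def)
        have "Poly_Mapping.keys (dscale c x) \<subseteq> Poly_Mapping.keys x"
        proof
          fix m assume "m \<in> Poly_Mapping.keys (dscale c x)"
          then obtain a b where "m = a + b" "a \<in> Poly_Mapping.keys (dconst c :: ('k, 'a) dpoly)" "b \<in> Poly_Mapping.keys x"
            using keys_mult[of "dconst c" x] unfolding dscale_def by blast
          then show "m \<in> Poly_Mapping.keys x" using k by auto
        qed
        then show ?thesis using ax by blast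
      qed
    qed simp
  qed
next
  interpret M: Modules.module dscale by (rule module_dscale)
  assume H: "\<forall>m\<in>Poly_Mapping.keys p. dweight m = n"
  have "(\<Sum>m\<in>Poly_Mapping.keys p. Poly_Mapping.single m (Poly_Mapping.lookup p m)) \<in> dhom n"
    unfolding dhom_def
  proof (rule M.span_sum)
    fix m assume "m \<in> Poly_Mapping.keys p"
    then have "mon m \<in> {Poly_Mapping.single m 1 | m. dweight m = n}" using H by auto
    then have "dscale (Poly_Mapping.lookup p m) (mon m) \<in> M.span {Poly_Mapping.single m 1 | m. dweight m = n}"
      by (intro M.span_scale M.span_base)
    then show "Poly_Mapping.single m (Poly_Mapping.lookup p m) \<in> M.span {Poly_Mapping.single m 1 | m. dweight m = n}"
      by (simp add: dscale_single)
  qed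
  moreover have "(\<Sum>m\<in>Poly_Mapping.keys p. Poly_Mapping.single m (Poly_Mapping.lookup p m)) = p"
    by (rule poly_expand[symmetric])
  ultimately show "p \<in> dhom n" by simp
qed

lemma mon_dhom: "dweight m = n \<Longrightarrow> Poly_Mapping.single m c \<in> dhom n"
  by (simp add: dhom_iff)

lemma dsym_dhom: "dsym x i \<in> dhom i"
  by (simp add: dhom_iff dsym_def)

lemma dhom_subspace: "Modules.module.subspace dscale (dhom n)"
proof -
  interpret M: Modules.module dscale by (rule module_dscale)
  show ?thesis unfolding dhom_def by simp
qed

lemma dhom_add: "p \<in> dhom n \<Longrightarrow> q \<in> dhom n \<Longrightarrow> p + q \<in> dhom n"
  using dhom_subspace module.subspace_add[OF module_dscale] by blast
lemma dhom_diff: "p \<in> dhom n \<Longrightarrow> q \<in> dhom n \<Longrightarrow> p - q \<in> dhom n"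
  using dhom_subspace module.subspace_diff[OF module_dscale] by blast
lemma dhom_scale: "p \<in> dhom n \<Longrightarrow> dscale c p \<in> dhom n"
  using dhom_subspace module.subspace_scale[OF module_dscale] by blast
lemma dhom_zero: "0 \<in> dhom n"
  using dhom_subspace module.subspace_0[OF module_dscale] by blast
lemma dhom_sum: "(\<And>x. x \<in> A \<Longrightarrow> f x \<in> dhom n) \<Longrightarrow> sum f A \<in> dhom n"
  using dhom_subspace module.subspace_sum[OF module_dscale] by blast

lemma dhom_mult: "p \<in> dhom a \<Longrightarrow> q \<in> dhom b \<Longrightarrow> p * q \<in> dhom (a + b)"
  unfolding dhom_iff using keys_mult[of p q] by fastforce

lemma dhom_one: "1 \<in> dhom 0"
  by (metis mon_dhom dweight_empty single_one)

lemma dhom_of_nat_mult: "p \<in> dhom n \<Longrightarrow> of_nat c * p \<in> dhom n"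
  using dhom_scale[of p n "of_nat c"] by (simp add: dscale_of_nat)
lemma dhom_dconst_mult: "p \<in> dhom n \<Longrightarrow> dconst c * p \<in> dhom n"
  using dhom_scale[of p n c] by (simp add: dscale_def)


abbreviation imk :: "('k \<Rightarrow> 'l) \<Rightarrow> ('k \<times> nat) multiset \<Rightarrow> ('l \<times> nat) multiset" where
  "imk f m \<equiv> image_mset (apfst f) m"

lemma dmap_alt:
  assumes "finite A" "Poly_Mapping.keys p \<subseteq> A"
  shows "dmap f p = (\<Sum>m\<in>A. Poly_Mapping.single (imk f m) (Poly_Mapping.lookup p m))"
  unfolding dmap_def
  by (rule sum.mono_neutral_left) (use assms in \<open>auto simp: in_keys_iff\<close>)

lemma dmap_add: "dmap f (p + q) = dmap f p + dmap f q"
proof -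
  let ?A = "Poly_Mapping.keys p \<union> Poly_Mapping.keys q"
  have fin: "finite ?A" by simp
  have "dmap f (p + q) = (\<Sum>m\<in>?A. Poly_Mapping.single (imk f m) (Poly_Mapping.lookup (p + q) m))"
    by (rule dmap_alt[OF fin]) (use keys_add[of p q] in auto)
  also have "\<dots> = (\<Sum>m\<in>?A. Poly_Mapping.single (imk f m) (Poly_Mapping.lookup p m))
      + (\<Sum>m\<in>?A. Poly_Mapping.single (imk f m) (Poly_Mapping.lookup q m))"
    by (simp add: lookup_add single_add sum.distrib)
  also have "\<dots> = dmap f p + dmap f q"
    by (simp add: dmap_alt[OF fin])
  finally show ?thesis .
qed

lemma additive_dmap: "additive (dmap f)"
  by (rule additive.intro) (rule dmap_add)

lemma dmap_sum: "dmap f (sum g A) = (\<Sum>x\<in>A. dmap f (g x))"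
  using additive.sum[OF additive_dmap] .
lemma dmap_diff: "dmap f (p - q) = dmap f p - dmap f q"
  using additive.diff[OF additive_dmap] .
lemma dmap_zero [simp]: "dmap f 0 = 0"
  using additive.zero[OF additive_dmap] .

lemma dmap_single [simp]: "dmap f (Poly_Mapping.single m c) = Poly_Mapping.single (imk f m) c"
proof (cases "c = 0")
  case True then show ?thesis by (simp add: dmap_def)
next
  case False then show ?thesis by (simp add: dmap_def)
qed

lemma mult_sums_single:
  "(\<Sum>a\<in>A. Poly_Mapping.single (h a) (u a)) * (\<Sum>b\<in>B. Poly_Mapping.single (k b) (v b))
   = (\<Sum>a\<in>A. \<Sum>b\<in>B. Poly_Mapping.single (h a + k b) (u a * v b))"
  unfolding sum_product by (simp add: mult_single)

lemma dmap_mult: "dmap f (p * q) = dmap f p * dmap f q"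
proof -
  have ep: "p = (\<Sum>a\<in>Poly_Mapping.keys p. Poly_Mapping.single a (Poly_Mapping.lookup p a))"
    by (rule poly_expand)
  have eq: "q = (\<Sum>b\<in>Poly_Mapping.keys q. Poly_Mapping.single b (Poly_Mapping.lookup q b))"
    by (rule poly_expand)
  have "p * q = (\<Sum>a\<in>Poly_Mapping.keys p. Poly_Mapping.single a (Poly_Mapping.lookup p a))
         * (\<Sum>b\<in>Poly_Mapping.keys q. Poly_Mapping.single b (Poly_Mapping.lookup q b))"
    using ep eq by (rule arg_cong2[where f="(*)"])
  also have "\<dots> = (\<Sum>a\<in>Poly_Mapping.keys p. \<Sum>b\<in>Poly_Mapping.keys q.
       Poly_Mapping.single (a + b) (Poly_Mapping.lookup p a * Poly_Mapping.lookup q b))"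
    by (rule mult_sums_single)
  finally have pq: "p * q = \<dots>" .
  have "dmap f (p * q) = (\<Sum>a\<in>Poly_Mapping.keys p. \<Sum>b\<in>Poly_Mapping.keys q.
       Poly_Mapping.single (imk f a + imk f b) (Poly_Mapping.lookup p a * Poly_Mapping.lookup q b))"
    unfolding pq by (simp add: dmap_sum)
  also have "\<dots> = (\<Sum>a\<in>Poly_Mapping.keys p. Poly_Mapping.single (imk f a) (Poly_Mapping.lookup p a))
         * (\<Sum>b\<in>Poly_Mapping.keys q. Poly_Mapping.single (imk f b) (Poly_Mapping.lookup q b))"
    by (rule mult_sums_single[symmetric])
  also have "\<dots> = dmap f p * dmap f q"
    by (simp add: dmap_def)
  finally show ?thesis .
qed

lemma dmap_one [simp]: "dmap f 1 = 1"
  using dmap_single[of f 0 1] by simp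

lemma dmap_dconst [simp]: "dmap f (dconst c) = dconst c"
  by (simp add: dconst_def)

lemma dmap_dscale: "dmap f (dscale c p) = dscale c (dmap f p)"
  by (simp add: dscale_def dmap_mult)

lemma dmap_of_nat [simp]: "dmap f (of_nat c) = of_nat c"
  using dmap_single[of f 0 "of_nat c"] by (simp del: dmap_single)

lemma dmap_dsym [simp]: "dmap f (dsym x i) = dsym (f x) i"
  by (simp add: dsym_def)

lemma dmap_comp: "dmap f (dmap g p) = dmap (f \<circ> g) p"
proof -
  have "dmap g p = (\<Sum>m\<in>Poly_Mapping.keys p. Poly_Mapping.single (imk g m) (Poly_Mapping.lookup p m))"
    by (simp add: dmap_def)
  then have "dmap f (dmap g p) = (\<Sum>m\<in>Poly_Mapping.keys p. Poly_Mapping.single (imk f (imk g m)) (Poly_Mapping.lookup p m))"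
    by (simp add: dmap_sum)
  also have "\<dots> = dmap (f \<circ> g) p"
    by (simp add: dmap_def multiset.map_comp comp_def apfst_compose)
  finally show ?thesis .
qed

lemma dmap_dhom: "p \<in> dhom n \<Longrightarrow> dmap f p \<in> dhom n"
  unfolding dmap_def by (rule dhom_sum) (auto simp: dhom_iff intro!: mon_dhom)

definition proj :: "nat \<Rightarrow> ('k, 'a::comm_ring_1) dpoly \<Rightarrow> ('k, 'a) dpoly" where
  "proj n p = (\<Sum>m\<in>{m\<in>Poly_Mapping.keys p. dweight m = n}. Poly_Mapping.single m (Poly_Mapping.lookup p m))"

lemma lookup_proj: "Poly_Mapping.lookup (proj n p) k = (if dweight k = n then Poly_Mapping.lookup p k else 0)"
proof -
  have "Poly_Mapping.lookup (proj n p) k = (\<Sum>m\<in>{m\<in>Poly_Mapping.keys p. dweight m = n}. (if m = k then Poly_Mapping.lookup p m else 0))"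
    unfolding proj_def lookup_sum by (intro sum.cong refl) (simp add: lookup_single when_def)
  also have "\<dots> = (if k \<in> {m\<in>Poly_Mapping.keys p. dweight m = n} then Poly_Mapping.lookup p k else 0)"
    by (simp add: sum.delta')
  also have "\<dots> = (if dweight k = n then Poly_Mapping.lookup p k else 0)"
    by (simp add: in_keys_iff)
  finally show ?thesis .
qed

lemma proj_add: "proj n (p + q) = proj n p + proj n q"
  by (rule poly_mapping_eqI) (simp add: lookup_proj lookup_add)

lemma additive_proj: "additive (proj n)"
  by (rule additive.intro) (rule proj_add)

lemma proj_sum: "proj n (sum g A) = (\<Sum>x\<in>A. proj n (g x))"
  using additive.sum[OF additive_proj] .
lemma proj_zero [simp]: "proj n 0 = 0"
  using additive.zero[OF additive_proj] .

lemma proj_same: "p \<in> dhom n \<Longrightarrow> proj n p = p"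
  by (rule poly_mapping_eqI) (auto simp: lookup_proj dhom_iff in_keys_iff)

lemma proj_other: "p \<in> dhom j \<Longrightarrow> j \<noteq> n \<Longrightarrow> proj n p = 0"
  by (rule poly_mapping_eqI) (auto simp: lookup_proj dhom_iff in_keys_iff)


lemma ideal_subspace: "Modules.module.subspace (*) (dideal scale q)"
  unfolding dideal_def using module.subspace_span[OF module_mult] .

lemma ideal_add: "a \<in> dideal scale q \<Longrightarrow> b \<in> dideal scale q \<Longrightarrow> a + b \<in> dideal scale q"
  using module.subspace_add[OF module_mult ideal_subspace] by blast
lemma ideal_diff: "a \<in> dideal scale q \<Longrightarrow> b \<in> dideal scale q \<Longrightarrow> a - b \<in> dideal scale q"
  using module.subspace_diff[OF module_mult ideal_subspace] by blast
lemma ideal_neg: "a \<in> dideal scale q \<Longrightarrow> - a \<in> dideal scale q"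
  using module.subspace_neg[OF module_mult ideal_subspace] by blast
lemma ideal_zero: "0 \<in> dideal scale q"
  using module.subspace_0[OF module_mult ideal_subspace] by blast
lemma ideal_multL: "a \<in> dideal scale q \<Longrightarrow> c * a \<in> dideal scale q"
  using module.subspace_scale[OF module_mult ideal_subspace] by blast
lemma ideal_multR: "a \<in> dideal scale q \<Longrightarrow> a * c \<in> dideal scale q"
  using ideal_multL[of a scale q c] by (simp add: mult.commute)
lemma ideal_sum: "(\<And>x. x \<in> A \<Longrightarrow> f x \<in> dideal scale q) \<Longrightarrow> sum f A \<in> dideal scale q"
  using module.subspace_sum[OF module_mult ideal_subspace] by blast
lemma ideal_dscale: "a \<in> dideal scale q \<Longrightarrow> dscale c a \<in> dideal scale q"
  unfolding dscale_def by (rule ideal_multL)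
lemma ideal_rel: "r \<in> drels scale q \<Longrightarrow> r \<in> dideal scale q"
  unfolding dideal_def by (rule module.span_base[OF module_mult])

lemma rel0: "dsym (q x) 0 - 1 \<in> dideal scale q"
  by (rule ideal_rel) (auto simp: drels_def)
lemma rel_scale: "dsym (q (scale c x)) k - dconst (c ^ k) * dsym (q x) k \<in> dideal scale q"
  by (rule ideal_rel) (unfold drels_def, blast)
lemma rel_prod: "dsym (q x) i * dsym (q x) j - of_nat ((i + j) choose i) * dsym (q x) (i + j) \<in> dideal scale q"
  by (rule ideal_rel) (unfold drels_def, blast)
lemma rel_sum: "dsym (q (x + y)) k - (\<Sum>i\<le>k. dsym (q x) i * dsym (q y) (k - i)) \<in> dideal scale q"
  by (rule ideal_rel) (unfold drels_def, blast)

definition W :: "('a::comm_ring_1 \<Rightarrow> 'b::ab_group_add \<Rightarrow> 'b) \<Rightarrow> nat \<Rightarrow> ('b, 'a) dpoly set \<Rightarrow> ('b, 'a) dpoly set" where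
  "W scale n X = {a + b | a b. a \<in> Modules.module.span dscale X \<and> b \<in> dideal scale (\<lambda>x. x) \<inter> dhom n}"

lemma span_dhom: "X \<subseteq> dhom n \<Longrightarrow> Modules.module.span dscale X \<subseteq> dhom n"
  by (rule module.span_minimal[OF module_dscale]) (auto intro: dhom_subspace)

context
  fixes scale :: "'a::comm_ring_1 \<Rightarrow> 'b::ab_group_add \<Rightarrow> 'b" and n :: nat and X :: "('b, 'a) dpoly set"
  assumes Xh: "X \<subseteq> dhom n"
begin

lemma W_dhom: "p \<in> W scale n X \<Longrightarrow> p \<in> dhom n"
  unfolding W_def using span_dhom[OF Xh] by (auto intro!: dhom_add)

lemma W_add: "p \<in> W scale n X \<Longrightarrow> p' \<in> W scale n X \<Longrightarrow> p + p' \<in> W scale n X"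
proof -
  assume "p \<in> W scale n X" "p' \<in> W scale n X"
  then obtain a b a' b' where "p = a + b" "p' = a' + b'" "a \<in> Modules.module.span dscale X"
    "a' \<in> Modules.module.span dscale X" "b \<in> dideal scale (\<lambda>x. x) \<inter> dhom n" "b' \<in> dideal scale (\<lambda>x. x) \<inter> dhom n"
    unfolding W_def by blast
  then show ?thesis unfolding W_def
    by (intro CollectI exI[of _ "a + a'"] exI[of _ "b + b'"])
       (auto simp: algebra_simps intro: module.span_add[OF module_dscale] ideal_add dhom_add)
qed

lemma W_scale: "p \<in> W scale n X \<Longrightarrow> dscale c p \<in> W scale n X"
proof -
  assume "p \<in> W scale n X"
  then obtain a b where "p = a + b" "a \<in> Modules.module.span dscale X"
    "b \<in> dideal scale (\<lambda>x. x) \<inter> dhom n"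
    unfolding W_def by blast
  then show ?thesis unfolding W_def
    by (intro CollectI exI[of _ "dscale c a"] exI[of _ "dscale c b"])
       (auto simp: module.scale_right_distrib[OF module_dscale]
         intro: module.span_scale[OF module_dscale] ideal_dscale dhom_scale)
qed

lemma W_zero: "0 \<in> W scale n X"
  unfolding W_def
  by (intro CollectI exI[of _ 0] exI[of _ 0])
     (auto intro: module.span_zero[OF module_dscale] ideal_zero dhom_zero)

lemma W_subspace: "Modules.module.subspace dscale (W scale n X)"
  by (rule module.subspaceI[OF module_dscale]) (auto intro: W_zero W_add W_scale)

lemma W_neg: "p \<in> W scale n X \<Longrightarrow> - p \<in> W scale n X"
  using module.subspace_neg[OF module_dscale W_subspace] by blast
lemma W_diff: "p \<in> W scale n X \<Longrightarrow> p' \<in> W scale n X \<Longrightarrow> p - p' \<in> W scale n X"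
  using module.subspace_diff[OF module_dscale W_subspace] by blast
lemma W_sum: "(\<And>x. x \<in> A \<Longrightarrow> f x \<in> W scale n X) \<Longrightarrow> sum f A \<in> W scale n X"
  using module.subspace_sum[OF module_dscale W_subspace] by blast

lemma W_ideal: "b \<in> dideal scale (\<lambda>x. x) \<Longrightarrow> b \<in> dhom n \<Longrightarrow> b \<in> W scale n X"
  unfolding W_def
  by (intro CollectI exI[of _ 0] exI[of _ b]) (auto intro: module.span_zero[OF module_dscale])

lemma W_span: "a \<in> Modules.module.span dscale X \<Longrightarrow> a \<in> W scale n X"
  unfolding W_def
  by (intro CollectI exI[of _ a] exI[of _ 0]) (auto intro: ideal_zero dhom_zero)

lemma W_base: "a \<in> X \<Longrightarrow> a \<in> W scale n X"
  by (rule W_span) (rule module.span_base[OF module_dscale])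

lemma W_cong: "p \<in> W scale n X \<Longrightarrow> p' \<in> dhom n \<Longrightarrow> p' - p \<in> dideal scale (\<lambda>x. x) \<Longrightarrow> p' \<in> W scale n X"
proof -
  assume a: "p \<in> W scale n X" "p' \<in> dhom n" "p' - p \<in> dideal scale (\<lambda>x. x)"
  have "p' - p \<in> W scale n X" by (rule W_ideal) (use a W_dhom in \<open>auto intro: dhom_diff\<close>)
  from W_add[OF a(1) this] show ?thesis by simp
qed

end




definition Xs :: "'b \<Rightarrow> ('b, 'a::comm_ring_1) dpoly fps" where
  "Xs b = Abs_fps (dsym b)"
definition Zs :: "'b \<Rightarrow> ('b, 'a::comm_ring_1) dpoly fps" where
  "Zs b = Abs_fps (\<lambda>d. dsym b (Suc d))"

primrec G :: "'b::ab_group_add \<Rightarrow> 'b list \<Rightarrow> ('b, 'a::comm_ring_1) dpoly fps" where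
  "G b [] = Xs b"
| "G b (y # ys) = G (b + y) ys - G b ys"

definition fcong :: "('a::comm_ring_1 \<Rightarrow> 'b::ab_group_add \<Rightarrow> 'b) \<Rightarrow> ('b, 'a) dpoly fps \<Rightarrow> ('b, 'a) dpoly fps \<Rightarrow> bool" where
  "fcong scale f g \<longleftrightarrow> (\<forall>d. f $ d - g $ d \<in> dideal scale (\<lambda>x. x))"

lemma fcong_refl: "fcong scale f f"
  by (simp add: fcong_def ideal_zero)

lemma fcong_trans: "fcong scale f g \<Longrightarrow> fcong scale g h \<Longrightarrow> fcong scale f h"
  unfolding fcong_def
proof
  fix d assume a1: "\<forall>d. f $ d - g $ d \<in> dideal scale (\<lambda>x. x)" and a2: "\<forall>d. g $ d - h $ d \<in> dideal scale (\<lambda>x. x)"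
  have "(f $ d - g $ d) + (g $ d - h $ d) \<in> dideal scale (\<lambda>x. x)" by (rule ideal_add) (use a1 a2 in auto)
  then show "f $ d - h $ d \<in> dideal scale (\<lambda>x. x)" by (simp add: algebra_simps)
qed

lemma fcong_diff: "fcong scale f g \<Longrightarrow> fcong scale f' g' \<Longrightarrow> fcong scale (f - f') (g - g')"
  unfolding fcong_def
proof
  fix d assume a1: "\<forall>d. f $ d - g $ d \<in> dideal scale (\<lambda>x. x)" and a2: "\<forall>d. f' $ d - g' $ d \<in> dideal scale (\<lambda>x. x)"
  have "(f $ d - g $ d) - (f' $ d - g' $ d) \<in> dideal scale (\<lambda>x. x)" by (rule ideal_diff) (use a1 a2 in auto)
  then show "(f - f') $ d - (g - g') $ d \<in> dideal scale (\<lambda>x. x)" by (simp add: algebra_simps)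
qed

lemma fcong_multL: "fcong scale f g \<Longrightarrow> fcong scale (h * f) (h * g)"
  unfolding fcong_def
proof
  fix d assume a: "\<forall>d. f $ d - g $ d \<in> dideal scale (\<lambda>x. x)"
  have "(\<Sum>i = 0..d. h $ i * (f $ (d - i) - g $ (d - i))) \<in> dideal scale (\<lambda>x. x)"
    by (rule ideal_sum) (use a in \<open>blast intro: ideal_multL\<close>)
  then show "(h * f) $ d - (h * g) $ d \<in> dideal scale (\<lambda>x. x)"
    by (simp add: fps_mult_nth sum_subtractf right_diff_distrib)
qed

lemma fcong_multR: "fcong scale f g \<Longrightarrow> fcong scale (f * h) (g * h)"
  using fcong_multL[of scale f g h] by (simp add: mult.commute)

lemma fcong_eq: "f = g \<Longrightarrow> fcong scale f g"
  by (simp add: fcong_refl)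

lemma Xs_add: "fcong scale (Xs (b + y)) (Xs b * Xs y)"
  unfolding fcong_def
proof
  fix d
  have "dsym ((\<lambda>x. x) (b + y)) d - (\<Sum>i\<le>d. dsym ((\<lambda>x. x) b) i * dsym ((\<lambda>x. x) y) (d - i)) \<in> dideal scale (\<lambda>x. x)"
    by (rule rel_sum)
  then show "Xs (b + y) $ d - (Xs b * Xs y) $ d \<in> dideal scale (\<lambda>x. x)"
    by (simp add: Xs_def fps_mult_nth atLeast0AtMost)
qed

lemma Xs_minus1: "fcong scale (Xs y - 1) (fps_X * Zs y)"
  unfolding fcong_def
proof
  fix d
  show "(Xs y - 1) $ d - (fps_X * Zs y) $ d \<in> dideal scale (\<lambda>x. x)"
  proof (cases d)
    case 0
    have "dsym ((\<lambda>x. x) y) 0 - 1 \<in> dideal scale (\<lambda>x. x)" by (rule rel0)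
    then show ?thesis using 0 by (simp add: Xs_def fps_X_mult_nth)
  next
    case (Suc e)
    then show ?thesis by (simp add: Xs_def Zs_def fps_X_mult_nth ideal_zero)
  qed
qed

lemma alg1: "(a::'x::comm_ring_1) * b * t - a * t = (b - 1) * (a * t)"
  by (simp add: algebra_simps)
lemma alg2: "((x::'x::comm_ring_1) * z) * (a * (x ^ L * P)) = a * (x ^ Suc L * (z * P))"
  by (simp add: mult_ac)

lemma G_formula: "fcong scale (G b ys) (Xs b * (fps_X ^ length ys * prod_list (map Zs ys)))"
proof (induction ys arbitrary: b)
  case Nil
  show ?case by (simp add: fcong_refl)
next
  case (Cons y ys)
  let ?T = "fps_X ^ length ys * prod_list (map Zs ys)"
  have h1: "fcong scale (G b (y # ys)) (Xs (b + y) * ?T - Xs b * ?T)"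
    unfolding G.simps(2) by (rule fcong_diff[OF Cons.IH Cons.IH])
  have h2: "fcong scale (Xs (b + y) * ?T - Xs b * ?T) (Xs b * Xs y * ?T - Xs b * ?T)"
    by (intro fcong_diff fcong_multR Xs_add fcong_refl)
  have h3: "Xs b * Xs y * ?T - Xs b * ?T = (Xs y - 1) * (Xs b * ?T)"
    by (rule alg1)
  have h4: "fcong scale ((Xs y - 1) * (Xs b * ?T)) ((fps_X * Zs y) * (Xs b * ?T))"
    by (intro fcong_multR Xs_minus1)
  have h5: "(fps_X * Zs y) * (Xs b * ?T) = Xs b * (fps_X ^ length (y # ys) * prod_list (map Zs (y # ys)))"
    unfolding alg2 by simp
  have "fcong scale (G b (y # ys)) ((Xs y - 1) * (Xs b * ?T))"
    using fcong_trans[OF h1 h2] unfolding h3 .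
  from fcong_trans[OF this h4] show ?case unfolding h5 .
qed

lemma prod_Zs_0: "prod_list (map Zs ys) $ 0 = prod_list (map (\<lambda>y. dsym y 1) ys)"
  by (induction ys) (simp_all add: Zs_def)

lemma coeff_top: "(Xs b * (fps_X ^ L * P)) $ L = dsym b 0 * P $ 0"
proof -
  have "(Xs b * (fps_X ^ L * P)) $ L = (\<Sum>i = 0..L. Xs b $ i * (fps_X ^ L * P) $ (L - i))"
    by (simp add: fps_mult_nth)
  also have "\<dots> = (\<Sum>i\<in>{0}. Xs b $ i * (fps_X ^ L * P) $ (L - i))"
    by (rule sum.mono_neutral_right) (auto simp: fps_X_power_mult_nth)
  also have "\<dots> = dsym b 0 * P $ 0" by (simp add: Xs_def fps_X_power_mult_nth)
  finally show ?thesis .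
qed

lemma G_top: "G b ys $ length ys - prod_list (map (\<lambda>y. dsym y 1) ys) \<in> dideal scale (\<lambda>x. x)"
proof -
  have "G b ys $ length ys - dsym b 0 * prod_list (map (\<lambda>y. dsym y 1) ys) \<in> dideal scale (\<lambda>x. x)"
  proof -
    have "G b ys $ length ys - (Xs b * (fps_X ^ length ys * prod_list (map Zs ys))) $ length ys \<in> dideal scale (\<lambda>x. x)"
      using G_formula[of scale b ys] unfolding fcong_def by blast
    then show ?thesis unfolding coeff_top prod_Zs_0 .
  qed
  moreover have "dsym ((\<lambda>x. x) b) 0 - 1 \<in> dideal scale (\<lambda>x. x)" by (rule rel0)
  then have "(dsym b 0 - 1) * prod_list (map (\<lambda>y. dsym y 1) ys) \<in> dideal scale (\<lambda>x. x)"
    by (simp add: ideal_multR)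
  ultimately have "(G b ys $ length ys - dsym b 0 * prod_list (map (\<lambda>y. dsym y 1) ys))
     + (dsym b 0 - 1) * prod_list (map (\<lambda>y. dsym y 1) ys) \<in> dideal scale (\<lambda>x. x)"
    by (rule ideal_add)
  then show ?thesis by (simp add: algebra_simps)
qed

lemma prod_dsym1: "prod_list (map (\<lambda>y. dsym y 1) ys) = (mon (mset (map (\<lambda>y. (y, 1)) ys)) :: ('b, 'a::comm_ring_1) dpoly)"
  by (induction ys) (simp_all add: dsym_def mult_single)

lemma G_V: "G b ys $ d \<in> Modules.module.span dscale {dsym x d | x. True}"
proof (induction ys arbitrary: b)
  case Nil
  then show ?case by (auto simp: Xs_def intro!: module.span_base[OF module_dscale])
next
  case (Cons y ys)
  then show ?case by (simp add: module.span_diff[OF module_dscale])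
qed

lemma G_K:
  assumes "z \<in> N"
  shows "(G (b + z) ys :: ('b::ab_group_add, 'a::comm_ring_1) dpoly fps) $ d - G b ys $ d \<in> Modules.module.span dscale {dsym (x + y) d - dsym x d | x y. y \<in> N}"
proof (induction ys arbitrary: b)
  case Nil
  then show ?case using assms by (auto simp: Xs_def intro!: module.span_base[OF module_dscale])
next
  case (Cons y ys)
  have e: "b + z + y = (b + y) + z" by (simp add: algebra_simps)
  have "((G (b + y + z) ys :: ('b, 'a) dpoly fps) $ d - G (b + y) ys $ d) - (G (b + z) ys $ d - G b ys $ d)
     \<in> Modules.module.span dscale {dsym (x + y) d - dsym x d | x y. y \<in> N}"
    using Cons.IH[of "b + y"] Cons.IH[of b] by (rule module.span_diff[OF module_dscale])
  then show ?case by (simp add: e algebra_simps)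
qed


lemma mon_add: "(mon (a + b) :: ('k, 'a::comm_ring_1) dpoly) = mon a * mon b"
  by (simp add: mult_single)

lemma mon_add_mset: "(mon (add_mset (x, i) m) :: ('k, 'a::comm_ring_1) dpoly) = dsym x i * mon m"
  by (simp add: dsym_def mult_single)

lemma mon_empty: "(mon {#} :: ('k, 'a::comm_ring_1) dpoly) = 1"
  by simp

definition flat :: "('k \<times> nat) multiset \<Rightarrow> ('k \<times> nat) multiset" where
  "flat M = sum_mset (image_mset (\<lambda>s. replicate_mset (snd s) (fst s, 1)) M)"

definition cfac :: "('k \<times> nat) multiset \<Rightarrow> nat" where
  "cfac M = prod_mset (image_mset (\<lambda>s. fact (snd s)) M)"

lemma flat_empty [simp]: "flat {#} = {#}" by (simp add: flat_def)
lemma flat_add_mset [simp]: "flat (add_mset (x, i) M) = replicate_mset i (x, 1) + flat M"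
  by (simp add: flat_def)
lemma cfac_empty [simp]: "cfac {#} = 1" by (simp add: cfac_def)
lemma cfac_add_mset [simp]: "cfac (add_mset (x, i) M) = fact i * cfac M"
  by (simp add: cfac_def)

lemma dweight_replicate [simp]: "dweight (replicate_mset k (x, 1)) = k"
  by (induction k) auto
lemma dweight_replicate' [simp]: "dweight (replicate_mset k (x, Suc 0)) = k"
  by (induction k) auto

lemma dweight_flat: "dweight (flat M) = dweight M"
  by (induction M) auto

lemma flat_ones: "s \<in># flat M \<Longrightarrow> snd s = 1"
proof (induction M)
  case empty
  then show ?case by simp
next
  case (add t M)
  obtain x i where t: "t = (x, i)" by (cases t)
  from add.prems have "s \<in># replicate_mset i (x, 1) \<or> s \<in># flat M" by (simp add: t)
  then show ?case
  proof
    assume "s \<in># replicate_mset i (x, 1)"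
    then show ?thesis by (simp split: if_splits)
  next
    assume "s \<in># flat M"
    then show ?thesis by (rule add.IH)
  qed
qed

lemma ones_list:
  assumes "\<forall>s\<in>#F. snd s = 1"
  shows "\<exists>ys. F = mset (map (\<lambda>y. (y, 1)) ys) \<and> length ys = dweight F"
proof -
  obtain ys where ys: "mset ys = image_mset fst F" using ex_mset by blast
  have "mset (map (\<lambda>y. (y, 1::nat)) ys) = image_mset (\<lambda>y. (y, 1)) (image_mset fst F)"
    by (simp add: ys[symmetric])
  also have "\<dots> = image_mset (\<lambda>s. s) F"
    unfolding multiset.map_comp comp_def
    by (rule image_mset_cong) (use assms in \<open>auto intro: prod_eqI\<close>)
  finally have e: "F = mset (map (\<lambda>y. (y, 1)) ys)" by simp
  have "dweight (mset (map (\<lambda>y. (y, 1::nat)) ys)) = length ys"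
    by (induction ys) auto
  with e show ?thesis by auto
qed

lemma pow1:
  fixes scale :: "'a::comm_ring_1 \<Rightarrow> 'b::ab_group_add \<Rightarrow> 'b" and x :: 'b
  shows "of_nat (fact i) * dsym x i - mon (replicate_mset i (x, 1)) \<in> dideal scale (\<lambda>x. x)"
proof (induction i)
  case 0
  have "dsym ((\<lambda>x. x) x) 0 - 1 \<in> dideal scale (\<lambda>x. x)" by (rule rel0)
  then show ?case by simp
next
  case (Suc i)
  have r: "dsym ((\<lambda>x. x) x) 1 * dsym ((\<lambda>x. x) x) i - of_nat ((1 + i) choose 1) * dsym ((\<lambda>x. x) x) (1 + i) \<in> dideal scale (\<lambda>x. x)"
    by (rule rel_prod)
  let ?r = "dsym x 1 * dsym x i - of_nat (Suc i) * dsym x (Suc i) :: ('b, 'a) dpoly"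
  let ?h = "of_nat (fact i) * dsym x i - mon (replicate_mset i (x, 1)) :: ('b, 'a) dpoly"
  have r': "?r \<in> dideal scale (\<lambda>x. x)" using r by simp
  have "- (of_nat (fact i) * ?r) + dsym x 1 * ?h \<in> dideal scale (\<lambda>x. x)"
    by (intro ideal_add ideal_neg ideal_multL r' Suc.IH)
  moreover have "- (of_nat (fact i) * ?r) + dsym x 1 * ?h
     = of_nat (fact (Suc i)) * dsym x (Suc i) - dsym x 1 * mon (replicate_mset i (x, 1))"
    by (simp add: algebra_simps)
  moreover have "dsym x 1 * mon (replicate_mset i (x, 1)) = (mon (replicate_mset (Suc i) (x, 1)) :: ('b, 'a) dpoly)"
    by (simp add: mon_add_mset)
  ultimately show ?case by simp
qed

lemma flat_lemma:
  fixes scale :: "'a::comm_ring_1 \<Rightarrow> 'b::ab_group_add \<Rightarrow> 'b" and M :: "('b \<times> nat) multiset"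
  shows "of_nat (cfac M) * mon M - mon (flat M) \<in> dideal scale (\<lambda>x. x)"
proof (induction M)
  case empty
  then show ?case by (simp add: ideal_zero)
next
  case (add s M)
  obtain x i where s: "s = (x, i)" by (cases s)
  let ?A = "of_nat (fact i) * dsym x i - mon (replicate_mset i (x, 1)) :: ('b, 'a) dpoly"
  let ?B = "of_nat (cfac M) * mon M - mon (flat M) :: ('b, 'a) dpoly"
  have "?A * (of_nat (cfac M) * mon M) + mon (replicate_mset i (x, 1)) * ?B \<in> dideal scale (\<lambda>x. x)"
    by (intro ideal_add ideal_multR ideal_multL pow1 add.IH)
  moreover have "?A * (of_nat (cfac M) * mon M) + mon (replicate_mset i (x, 1)) * ?B
    = of_nat (cfac (add_mset s M)) * mon (add_mset s M) - mon (flat (add_mset s M))"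
    by (simp add: s mon_add_mset mon_add algebra_simps)
  ultimately show ?case by simp
qed

lemma zero_part:
  fixes scale :: "'a::comm_ring_1 \<Rightarrow> 'b::ab_group_add \<Rightarrow> 'b" and Z :: "('b \<times> nat) multiset"
  shows "(\<forall>s\<in>#Z. snd s = 0) \<Longrightarrow> mon Z - 1 \<in> dideal scale (\<lambda>x. x)"
proof (induction Z)
  case empty
  then show ?case by (simp add: ideal_zero)
next
  case (add s Z)
  obtain x i where s: "s = (x, i)" by (cases s)
  with add have i: "i = 0" by simp
  have "dsym ((\<lambda>x. x) x) 0 - 1 \<in> dideal scale (\<lambda>x. x)" by (rule rel0)
  then have "dsym x 0 * (mon Z - 1) + (dsym x 0 - 1) \<in> dideal scale (\<lambda>x. x)"
    using add by (intro ideal_add ideal_multL) auto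
  then show ?case by (simp add: s i mon_add_mset algebra_simps)
qed

definition npart :: "('k \<times> nat) multiset \<Rightarrow> ('k \<times> nat) multiset" where
  "npart M = filter_mset (\<lambda>s. snd s \<noteq> 0) M"

lemma npart_nz: "s \<in># npart M \<Longrightarrow> snd s \<noteq> 0"
  by (simp add: npart_def)

lemma dweight_npart: "dweight (npart M) = dweight M"
  unfolding npart_def by (induction M) auto

lemma npart_mon:
  fixes scale :: "'a::comm_ring_1 \<Rightarrow> 'b::ab_group_add \<Rightarrow> 'b" and M :: "('b \<times> nat) multiset"
  shows "mon M - mon (npart M) \<in> dideal scale (\<lambda>x. x)"
proof -
  let ?Z = "filter_mset (\<lambda>s. snd s = 0) M"
  have M: "M = ?Z + npart M" unfolding npart_def by (simp add: multiset_partition[symmetric])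
  have "(mon ?Z - 1) * mon (npart M) \<in> dideal scale (\<lambda>x. x)"
    by (intro ideal_multR zero_part) auto
  moreover have "(mon ?Z - 1) * mon (npart M) = mon M - (mon (npart M) :: ('b, 'a) dpoly)"
    by (subst (2) M) (simp add: mon_add algebra_simps)
  ultimately show ?thesis by simp
qed


lemma fact_unit:
  assumes "(of_nat (fact (n - 1)) :: 'a::comm_ring_1) dvd 1" "k \<le> n - 1"
  shows "(of_nat (fact k) :: 'a) dvd 1"
proof -
  have "(fact k :: nat) dvd fact (n - 1)" by (rule fact_dvd) (rule assms(2))
  then obtain q where q: "fact (n - 1) = (fact k :: nat) * q" by (rule dvdE)
  have "(of_nat (fact k) :: 'a) dvd of_nat (fact (n - 1))"
    unfolding q of_nat_mult by (rule dvdI) (rule refl)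
  then show ?thesis using assms(1) by (rule dvd_trans)
qed

lemma cfac_unit:
  assumes "(of_nat (fact (n - 1)) :: 'a::comm_ring_1) dvd 1" "\<forall>s\<in>#M. snd s \<le> n - 1"
  shows "(of_nat (cfac M) :: 'a) dvd 1"
  using assms(2)
proof (induction M)
  case empty
  then show ?case by simp
next
  case (add s M)
  obtain x i where s: "s = (x, i)" by (cases s)
  have "(of_nat (fact i) :: 'a) dvd 1" using add.prems s by (intro fact_unit[OF assms(1)]) auto
  moreover have "(of_nat (cfac M) :: 'a) dvd 1" using add by auto
  ultimately have "(of_nat (fact i) :: 'a) * of_nat (cfac M) dvd 1 * 1" by (rule mult_dvd_mono)
  then show ?case by (simp add: s)
qed

context
  fixes scale :: "'a::comm_ring_1 \<Rightarrow> 'b::ab_group_add \<Rightarrow> 'b" and n :: nat and X :: "('b, 'a) dpoly set"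
  assumes Xh: "X \<subseteq> dhom n"
begin

lemma W_unit:
  assumes "(of_nat c :: 'a) dvd 1" "of_nat c * p \<in> W scale n X"
  shows "p \<in> W scale n X"
proof -
  obtain u where u: "1 = (of_nat c :: 'a) * u" using assms(1) by (elim dvdE)
  have "dscale u (dscale (of_nat c) p) \<in> W scale n X"
    using assms(2) by (simp add: dscale_of_nat W_scale[OF Xh])
  moreover have "dscale u (dscale (of_nat c) p) = p"
    using u by (simp add: module.scale_scale[OF module_dscale] mult.commute
        module.scale_one[OF module_dscale])
  ultimately show ?thesis by simp
qed

lemma tele:
  assumes step: "\<And>x i M. Q (x, i) \<Longrightarrow> (\<forall>s\<in>#M. Q s) \<Longrightarrow> dweight M + i = n \<Longrightarrow>
                   (dsym (h x) i - dsym x i) * mon M \<in> W scale n X"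
    and Qh: "\<And>x i. Q (x, i) \<Longrightarrow> Q (h x, i)"
  shows "(\<forall>s\<in>#m1. Q s) \<Longrightarrow> (\<forall>s\<in>#m2. Q s) \<Longrightarrow> dweight m1 + dweight m2 = n \<Longrightarrow>
         mon (m1 + imk h m2) - mon (m1 + m2) \<in> W scale n X"
proof (induction m2 arbitrary: m1)
  case empty
  then show ?case by (simp add: W_zero[OF Xh])
next
  case (add s m2)
  obtain x i where s: "s = (x, i)" by (cases s)
  have Qs: "Q (x, i)" using add.prems s by auto
  have A: "mon (add_mset (h x, i) m1 + imk h m2) - mon (add_mset (h x, i) m1 + m2) \<in> W scale n X"
    using add.prems Qh[OF Qs] s by (intro add.IH) auto
  have B: "(dsym (h x) i - dsym x i) * mon (m1 + m2) \<in> W scale n X"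
    using add.prems s by (intro step Qs) auto
  have "mon (add_mset (h x, i) m1 + imk h m2) - mon (add_mset (h x, i) m1 + m2)
      + (dsym (h x) i - dsym x i) * mon (m1 + m2) \<in> W scale n X"
    by (rule W_add[OF Xh A B])
  moreover have "mon (add_mset (h x, i) m1 + imk h m2) - mon (add_mset (h x, i) m1 + m2)
      + (dsym (h x) i - dsym x i) * mon (m1 + m2)
      = mon (m1 + imk h (add_mset s m2)) - (mon (m1 + add_mset s m2) :: ('b, 'a) dpoly)"
    by (simp add: s mon_add_mset algebra_simps)
  ultimately show ?case by simp
qed

end




definition Kset :: "nat \<Rightarrow> 'b::ab_group_add set \<Rightarrow> ('b, 'a::comm_ring_1) dpoly set" where
  "Kset n N = {dsym (x + y) n - dsym x n | x y. y \<in> N}"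
definition Vset :: "nat \<Rightarrow> ('b, 'a::comm_ring_1) dpoly set" where
  "Vset n = {dsym x n | x. True}"

lemma Kset_dhom: "Kset n N \<subseteq> dhom n"
  unfolding Kset_def by (auto intro!: dhom_diff dsym_dhom)
lemma Vset_dhom: "Vset n \<subseteq> dhom n"
  unfolding Vset_def by (auto intro!: dsym_dhom)

lemma dweight_ones [simp]: "dweight (mset (map (\<lambda>y. (y, 1::nat)) ys)) = length ys"
  by (induction ys) auto
lemma dweight_ones' [simp]: "dweight (image_mset (\<lambda>y. (y, Suc 0)) (mset ys)) = length ys"
  by (induction ys) auto

lemma rel1:
  fixes scale :: "'a::comm_ring_1 \<Rightarrow> 'b::ab_group_add \<Rightarrow> 'b"
  shows "dsym (a + z) 1 - dsym a 1 - dsym z 1 \<in> dideal scale (\<lambda>x. x)"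
proof -
  have r: "dsym ((\<lambda>x. x) (a + z)) 1 - (\<Sum>i\<le>1. dsym ((\<lambda>x. x) a) i * dsym ((\<lambda>x. x) z) (1 - i)) \<in> dideal scale (\<lambda>x. x)"
    by (rule rel_sum)
  have r': "dsym (a + z) 1 - (dsym a 0 * dsym z 1 + dsym a 1 * dsym z 0) \<in> dideal scale (\<lambda>x. x)"
    using r by (simp add: atMost_Suc add.commute)
  have a0: "dsym ((\<lambda>x. x) a) 0 - 1 \<in> dideal scale (\<lambda>x. x)" by (rule rel0)
  have z0: "dsym ((\<lambda>x. x) z) 0 - 1 \<in> dideal scale (\<lambda>x. x)" by (rule rel0)
  have f1: "(dsym (a + z) 1 - (dsym a 0 * dsym z 1 + dsym a 1 * dsym z 0)) + (dsym a 0 - 1) * dsym z 1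
         + dsym a 1 * (dsym z 0 - 1) \<in> dideal scale (\<lambda>x. x)"
    using a0 z0 by (intro ideal_add r' ideal_multR ideal_multL) auto
  have eq: "(dsym (a + z) 1 - (dsym a 0 * dsym z 1 + dsym a 1 * dsym z 0)) + (dsym a 0 - 1) * dsym z 1
         + dsym a 1 * (dsym z 0 - 1) = (dsym (a + z) 1 - dsym a 1 - dsym z 1 :: ('b, 'a) dpoly)"
    by (simp add: algebra_simps)
  show ?thesis using f1 unfolding eq .
qed

context
  fixes scale :: "'a::comm_ring_1 \<Rightarrow> 'b::ab_group_add \<Rightarrow> 'b" and n :: nat
  assumes n1: "n \<ge> 1" and unit: "(of_nat (fact (n - 1)) :: 'a) dvd 1"
begin

lemma Key1:
  assumes z: "z \<in> N" and len: "length ys = n - 1"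
  shows "(dsym (a + z) 1 - dsym a 1) * mon (mset (map (\<lambda>y. (y, 1)) ys)) \<in> W scale n (Kset n N)"
proof -
  let ?P = "mon (mset (map (\<lambda>y. (y, 1)) ys)) :: ('b, 'a) dpoly"
  have lenz: "length (z # ys) = n" using len n1 by simp
  have P1: "dsym z 1 * ?P = prod_list (map (\<lambda>y. dsym y 1) (z # ys))"
    by (simp only: list.map prod_list.Cons prod_dsym1)
  have Gt: "(G 0 (z # ys) :: ('b, 'a) dpoly fps) $ n - prod_list (map (\<lambda>y. dsym y 1) (z # ys)) \<in> dideal scale (\<lambda>x. x)"
    using G_top[of 0 "z # ys" scale] unfolding lenz .
  have "(G (0 + z) ys :: ('b, 'a) dpoly fps) $ n - G 0 ys $ n \<in> Modules.module.span dscale (Kset n N)"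
    using G_K[OF z, of 0 ys n] unfolding Kset_def .
  then have "(G 0 (z # ys) :: ('b, 'a) dpoly fps) $ n \<in> W scale n (Kset n N)"
    by (intro W_span[OF Kset_dhom]) simp
  moreover have Pd: "?P \<in> dhom (n - 1)" by (rule mon_dhom) (simp only: dweight_ones len)
  have n1': "1 + (n - 1) = n" using n1 by simp
  have "dsym z 1 * ?P \<in> dhom (1 + (n - 1))" by (rule dhom_mult[OF dsym_dhom Pd])
  then have "dsym z 1 * ?P \<in> dhom n" unfolding n1' .
  moreover
  have "dsym z 1 * ?P - (G 0 (z # ys) :: ('b, 'a) dpoly fps) $ n \<in> dideal scale (\<lambda>x. x)"
    using ideal_neg[OF Gt] unfolding P1 by simp
  ultimately have Z: "dsym z 1 * ?P \<in> W scale n (Kset n N)"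
    by (rule W_cong[OF Kset_dhom])
  have "(dsym (a + z) 1 - dsym a 1) * ?P \<in> dhom (1 + (n - 1))"
    by (rule dhom_mult[OF dhom_diff[OF dsym_dhom dsym_dhom] Pd])
  then have "(dsym (a + z) 1 - dsym a 1) * ?P \<in> dhom n" unfolding n1' .
  moreover have eq2: "(dsym (a + z) 1 - dsym a 1 - dsym z 1) * ?P = (dsym (a + z) 1 - dsym a 1) * ?P - dsym z 1 * ?P"
    by (simp only: left_diff_distrib)
  have "(dsym (a + z) 1 - dsym a 1) * ?P - dsym z 1 * ?P \<in> dideal scale (\<lambda>x. x)"
    using ideal_multR[OF rel1[of a z scale], of ?P] unfolding eq2 .
  ultimately show ?thesis by (rule W_cong[OF Kset_dhom Z])
qed

end


lemma snd_le_dweight: "s \<in># M \<Longrightarrow> snd s \<le> dweight M"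
proof -
  assume "s \<in># M"
  then obtain R where "M = add_mset s R" by (metis multi_member_split)
  then show ?thesis by simp
qed

lemma dweight0_empty: "\<forall>s\<in>#M. snd s \<noteq> 0 \<Longrightarrow> dweight M = 0 \<Longrightarrow> M = {#}"
proof (rule ccontr)
  assume a: "\<forall>s\<in>#M. snd s \<noteq> 0" "dweight M = 0" "M \<noteq> {#}"
  then obtain s where s: "s \<in># M" by blast
  then have "snd s \<le> 0" using snd_le_dweight[OF s] a(2) by simp
  with a(1) s show False by auto
qed

context
  fixes scale :: "'a::comm_ring_1 \<Rightarrow> 'b::ab_group_add \<Rightarrow> 'b" and n :: nat
  assumes n1: "n \<ge> 1" and unit: "(of_nat (fact (n - 1)) :: 'a) dvd 1"
begin

lemma Key_np:
  assumes z: "z \<in> N" and w: "dweight M + k = n" and nz: "\<forall>s\<in>#M. snd s \<noteq> 0"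
    and k0: "0 < k" and kn: "k < n"
  shows "(dsym (a + z) k - dsym a k) * mon M \<in> W scale n (Kset n N)"
proof -
  have Xh: "Kset n N \<subseteq> dhom n" by (rule Kset_dhom)
  have le: "\<forall>s\<in>#M. snd s \<le> n - 1"
  proof
    fix s assume "s \<in># M"
    then obtain R where "M = add_mset s R" by (metis multi_member_split)
    then have "snd s \<le> dweight M" by simp
    then show "snd s \<le> n - 1" using w k0 by simp
  qed
  define C where "C = fact k * cfac M"
  have u1: "(of_nat (fact k) :: 'a) dvd 1" by (rule fact_unit[OF unit]) (use kn in simp)
  have u2: "(of_nat (cfac M) :: 'a) dvd 1" by (rule cfac_unit[OF unit le])
  have Cu: "(of_nat C :: 'a) dvd 1"
    using mult_dvd_mono[OF u1 u2] unfolding C_def of_nat_mult by simp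
  have fl: "of_nat C * (dsym b k * mon M) - mon (replicate_mset k (b, 1) + flat M) \<in> dideal scale (\<lambda>x. x)" for b
    using flat_lemma[where scale=scale and M="add_mset (b, k) M"] by (simp add: C_def mon_add_mset mult.assoc)
  define Q :: "'b \<times> nat \<Rightarrow> bool" where "Q s = (snd s = 1)" for s
  have T: "mon (flat M + imk (\<lambda>x. x + z) (replicate_mset k (a, 1))) - mon (flat M + replicate_mset k (a, 1))
      \<in> W scale n (Kset n N)"
  proof (rule tele[OF Xh, of Q])
    fix x i and M' :: "('b \<times> nat) multiset"
    assume q: "Q (x, i)" and qM: "\<forall>s\<in>#M'. Q s" and wM: "dweight M' + i = n"
    have i: "i = 1" using q by (simp add: Q_def)
    obtain ys where ys: "M' = mset (map (\<lambda>y. (y, 1)) ys)" "length ys = dweight M'"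
      using ones_list[of M'] qM by (auto simp: Q_def)
    have "length ys = n - 1" using ys(2) wM i by simp
    then have "(dsym (x + z) 1 - dsym x 1) * mon (mset (map (\<lambda>y. (y, 1)) ys)) \<in> W scale n (Kset n N)"
      by (rule Key1[OF n1 unit z])
    then show "(dsym (x + z) i - dsym x i) * mon M' \<in> W scale n (Kset n N)"
      using ys(1) i by simp
  next
    show "Q (x + z, i)" if "Q (x, i)" for x i using that by (simp add: Q_def)
  next
    show "\<forall>s\<in>#flat M. Q s" by (auto simp: Q_def flat_ones)
    show "\<forall>s\<in>#replicate_mset k (a, 1). Q s" by (simp add: Q_def)
    show "dweight (flat M) + dweight (replicate_mset k (a, 1)) = n" using w by (simp add: dweight_flat)
  qed
  have im: "imk (\<lambda>x. x + z) (replicate_mset k (a, 1)) = replicate_mset k (a + z, 1)"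
    by simp
  let ?D = "(dsym (a + z) k - dsym a k) * mon M :: ('b, 'a) dpoly"
  have "?D \<in> dhom (k + dweight M)"
    by (rule dhom_mult[OF dhom_diff[OF dsym_dhom dsym_dhom] mon_dhom]) (rule refl)
  moreover have "k + dweight M = n" using w by simp
  ultimately have Dh: "?D \<in> dhom n" by simp
  have "of_nat C * ?D \<in> W scale n (Kset n N)"
  proof (rule W_cong[OF Xh T])
    show "of_nat C * ?D \<in> dhom n" by (rule dhom_of_nat_mult[OF Dh])
    have "(of_nat C * (dsym (a + z) k * mon M) - mon (replicate_mset k (a + z, 1) + flat M))
        - (of_nat C * (dsym a k * mon M) - mon (replicate_mset k (a, 1) + flat M)) \<in> dideal scale (\<lambda>x. x)"
      by (rule ideal_diff[OF fl fl])
    moreover have "(of_nat C * (dsym (a + z) k * mon M) - mon (replicate_mset k (a + z, 1) + flat M))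
        - (of_nat C * (dsym a k * mon M) - mon (replicate_mset k (a, 1) + flat M))
        = of_nat C * ?D - (mon (flat M + imk (\<lambda>x. x + z) (replicate_mset k (a, 1))) - mon (flat M + replicate_mset k (a, 1)))"
      unfolding im by (simp add: algebra_simps add.commute)
    ultimately show "of_nat C * ?D - (mon (flat M + imk (\<lambda>x. x + z) (replicate_mset k (a, 1))) - mon (flat M + replicate_mset k (a, 1)))
        \<in> dideal scale (\<lambda>x. x)" by simp
  qed
  then show ?thesis by (rule W_unit[OF Xh Cu])
qed


lemma Key:
  assumes z: "z \<in> N" and w: "dweight M + k = n"
  shows "(dsym (a + z) k - dsym a k) * mon M \<in> W scale n (Kset n N)"
proof -
  have Xh: "Kset n N \<subseteq> dhom n" by (rule Kset_dhom)
  let ?D = "(dsym (a + z) k - dsym a k) * mon M :: ('b, 'a) dpoly"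
  have "?D \<in> dhom (k + dweight M)"
    by (rule dhom_mult[OF dhom_diff[OF dsym_dhom dsym_dhom] mon_dhom]) (rule refl)
  moreover have "k + dweight M = n" using w by simp
  ultimately have Dh: "?D \<in> dhom n" by simp
  show ?thesis
  proof (cases "k = 0")
    case True
    have r1: "dsym (a + z) 0 - 1 \<in> dideal scale (\<lambda>x. x)" using rel0[of "\<lambda>x. x" "a + z" scale] by simp
    have r2: "dsym a 0 - 1 \<in> dideal scale (\<lambda>x. x)" using rel0[of "\<lambda>x. x" a scale] by simp
    have "((dsym (a + z) 0 - 1) - (dsym a 0 - 1)) * mon M \<in> dideal scale (\<lambda>x. x)"
      by (rule ideal_multR[OF ideal_diff[OF r1 r2]])
    then have "?D \<in> dideal scale (\<lambda>x. x)" using True by simp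
    then show ?thesis by (rule W_ideal[OF Xh _ Dh])
  next
    case False
    let ?M1 = "npart M"
    have nz: "\<forall>s\<in>#?M1. snd s \<noteq> 0" by (auto dest: npart_nz)
    have w1: "dweight ?M1 + k = n" using w by (simp add: dweight_npart)
    have D1: "(dsym (a + z) k - dsym a k) * mon ?M1 \<in> W scale n (Kset n N)"
    proof (cases "k = n")
      case True
      then have "?M1 = {#}" using w1 nz dweight0_empty by auto
      then have eq: "(dsym (a + z) k - dsym a k) * mon ?M1 = (dsym (a + z) n - dsym a n :: ('b, 'a) dpoly)" using True by simp
      have kin: "(dsym (a + z) n - dsym a n :: ('b, 'a) dpoly) \<in> Kset n N" unfolding Kset_def using z by blast
      show ?thesis unfolding eq by (rule W_base[OF Xh kin])
    next
      case False
      then have "k < n" using w by simp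
      then show ?thesis using Key_np[OF z w1 nz] \<open>k \<noteq> 0\<close> by simp
    qed
    have "(dsym (a + z) k - dsym a k) * (mon M - mon ?M1) \<in> dideal scale (\<lambda>x. x)"
      by (intro ideal_multL npart_mon)
    then have "?D - (dsym (a + z) k - dsym a k) * mon ?M1 \<in> dideal scale (\<lambda>x. x)"
      by (simp add: right_diff_distrib)
    then show ?thesis by (rule W_cong[OF Xh D1 Dh])
  qed
qed

lemma mon_V:
  assumes w: "dweight M = n"
  shows "(mon M :: ('b, 'a) dpoly) \<in> W scale n (Vset n)"
proof -
  have Xh: "(Vset n :: ('b, 'a) dpoly set) \<subseteq> dhom n" by (rule Vset_dhom)
  let ?M1 = "npart M"
  have nz: "\<forall>s\<in>#?M1. snd s \<noteq> 0" by (auto dest: npart_nz)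
  have w1: "dweight ?M1 = n" using w by (simp add: dweight_npart)
  have M1: "(mon ?M1 :: ('b, 'a) dpoly) \<in> W scale n (Vset n)"
  proof (cases "\<exists>s\<in>#?M1. snd s \<ge> n")
    case True
    then obtain s where s: "s \<in># ?M1" "snd s \<ge> n" by blast
    then obtain R where R: "?M1 = add_mset s R" by (metis multi_member_split)
    have "snd s + dweight R = n" using w1 R by simp
    then have sn: "snd s = n" and R0: "dweight R = 0" using s(2) by auto
    have "\<forall>t\<in>#R. snd t \<noteq> 0" using nz R by auto
    then have "R = {#}" using R0 dweight0_empty by blast
    then have "?M1 = {#(fst s, n)#}" using R sn by (cases s) auto
    then have "(mon ?M1 :: ('b, 'a) dpoly) = dsym (fst s) n" by (simp add: dsym_def)
    moreover have "(dsym (fst s) n :: ('b, 'a) dpoly) \<in> Vset n" unfolding Vset_def by blast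
    ultimately show ?thesis using W_base[OF Xh, where scale=scale] by simp
  next
    case False
    then have le: "\<forall>s\<in>#?M1. snd s \<le> n - 1" by auto
    obtain ys where ys: "flat ?M1 = mset (map (\<lambda>y. (y, 1)) ys)" "length ys = dweight (flat ?M1)"
    proof -
      have "\<forall>s\<in>#flat ?M1. snd s = 1" using flat_ones by blast
      from ones_list[OF this] show ?thesis using that by blast
    qed
    have len: "length ys = n" using ys(2) w1 by (simp add: dweight_flat)
    have "(G 0 ys :: ('b, 'a) dpoly fps) $ n \<in> W scale n (Vset n)"
      using G_V[of 0 ys n] unfolding Vset_def[symmetric] by (rule W_span[OF Xh])
    moreover have fh: "(mon (flat ?M1) :: ('b, 'a) dpoly) \<in> dhom n"
      by (rule mon_dhom) (simp add: dweight_flat w1)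
    moreover have "(mon (flat ?M1) :: ('b, 'a) dpoly) - (G 0 ys :: ('b, 'a) dpoly fps) $ n \<in> dideal scale (\<lambda>x. x)"
    proof -
      have "(G 0 ys :: ('b, 'a) dpoly fps) $ length ys - prod_list (map (\<lambda>y. dsym y 1) ys) \<in> dideal scale (\<lambda>x. x)"
        by (rule G_top)
      then have "- ((G 0 ys :: ('b, 'a) dpoly fps) $ n - prod_list (map (\<lambda>y. dsym y 1) ys)) \<in> dideal scale (\<lambda>x. x)"
        unfolding len by (rule ideal_neg)
      then show ?thesis unfolding ys(1) prod_dsym1 by simp
    qed
    ultimately have F: "(mon (flat ?M1) :: ('b, 'a) dpoly) \<in> W scale n (Vset n)"
      by (rule W_cong[OF Xh])
    have "of_nat (cfac ?M1) * (mon ?M1 :: ('b, 'a) dpoly) \<in> W scale n (Vset n)"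
    proof (rule W_cong[OF Xh F])
      show "of_nat (cfac ?M1) * (mon ?M1 :: ('b, 'a) dpoly) \<in> dhom n"
        by (intro dhom_of_nat_mult mon_dhom w1)
      show "of_nat (cfac ?M1) * (mon ?M1 :: ('b, 'a) dpoly) - mon (flat ?M1) \<in> dideal scale (\<lambda>x. x)"
        by (rule flat_lemma)
    qed
    then show ?thesis by (rule W_unit[OF Xh cfac_unit[OF unit le]])
  qed
  show ?thesis
  proof (rule W_cong[OF Xh M1])
    show "(mon M :: ('b, 'a) dpoly) \<in> dhom n" by (rule mon_dhom[OF w])
    show "(mon M :: ('b, 'a) dpoly) - mon ?M1 \<in> dideal scale (\<lambda>x. x)" by (rule npart_mon)
  qed
qed

end


definition sec :: "'b::ab_group_add set \<Rightarrow> 'b set \<Rightarrow> 'b" where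
  "sec N C = (SOME x. C = coset N x)"

lemma coset_sec: "coset N (sec N (coset N x)) = coset N x"
proof -
  have "\<exists>x'. coset N x = coset N x'" by blast
  then have "coset N x = coset N (sec N (coset N x))" unfolding sec_def by (rule someI_ex)
  then show ?thesis by simp
qed

context
  fixes scale :: "'a::comm_ring_1 \<Rightarrow> 'b::ab_group_add \<Rightarrow> 'b" and N :: "'b set"
  assumes M: "Modules.module scale" and NS: "Modules.module.subspace scale N"
begin

lemma N0: "0 \<in> N" using module.subspace_0[OF M NS] .
lemma Nadd: "x \<in> N \<Longrightarrow> y \<in> N \<Longrightarrow> x + y \<in> N" using module.subspace_add[OF M NS] by blast
lemma Nneg: "x \<in> N \<Longrightarrow> - x \<in> N" using module.subspace_neg[OF M NS] by blast
lemma Ndiff: "x \<in> N \<Longrightarrow> y \<in> N \<Longrightarrow> x - y \<in> N" using module.subspace_diff[OF M NS] by blast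

lemma coset_eq: "y \<in> N \<Longrightarrow> coset N (x + y) = coset N x"
proof -
  assume y: "y \<in> N"
  show ?thesis unfolding coset_def
  proof
    show "(+) (x + y) ` N \<subseteq> (+) x ` N"
    proof
      fix v assume "v \<in> (+) (x + y) ` N"
      then obtain w where w: "w \<in> N" "v = x + y + w" by blast
      then have "v = x + (y + w)" by (simp add: add.assoc)
      moreover have "y + w \<in> N" using Nadd[OF y w(1)] .
      ultimately show "v \<in> (+) x ` N" by blast
    qed
  next
    show "(+) x ` N \<subseteq> (+) (x + y) ` N"
    proof
      fix v assume "v \<in> (+) x ` N"
      then obtain w where w: "w \<in> N" "v = x + w" by blast
      then have "v = x + y + (w - y)" by (simp add: algebra_simps)
      moreover have "w - y \<in> N" using Ndiff[OF w(1) y] .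
      ultimately show "v \<in> (+) (x + y) ` N" by blast
    qed
  qed
qed

lemma sec_diff: "sec N (coset N x) - x \<in> N"
proof -
  let ?x' = "sec N (coset N x)"
  have "x \<in> coset N x" unfolding coset_def using N0 by force
  then have "x \<in> coset N ?x'" by (simp add: coset_sec)
  then obtain w where w: "w \<in> N" "x = ?x' + w" unfolding coset_def by blast
  then have "?x' - x = - w" by (simp add: algebra_simps)
  then show ?thesis using Nneg[OF w(1)] by simp
qed

end


context
  fixes scale :: "'a::comm_ring_1 \<Rightarrow> 'b::ab_group_add \<Rightarrow> 'b" and n :: nat and N :: "'b set"
  assumes n1: "n \<ge> 1" and unit: "(of_nat (fact (n - 1)) :: 'a) dvd 1"
    and M: "Modules.module scale" and NS: "Modules.module.subspace scale N"
begin

abbreviation "WK \<equiv> W scale n (Kset n N)"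

lemma Xh: "Kset n N \<subseteq> dhom n" by (rule Kset_dhom)

lemma Key':
  assumes "x' - x \<in> N" "dweight M + k = n"
  shows "(dsym x' k - dsym x k) * (mon M :: ('b, 'a) dpoly) \<in> WK"
  using Key[OF n1 unit assms(1) assms(2), of x] by simp

lemma hdiff: "sec N (coset N x) - x \<in> N"
  by (rule sec_diff[OF M NS])

lemma rc0:
  assumes w: "dweight M = n"
  shows "mon M * dmap (sec N) (dsym (coset N x) 0 - 1) \<in> WK"
proof -
  let ?x = "sec N (coset N x)"
  have e: "dmap (sec N) (dsym (coset N x) 0 - 1) = (dsym ?x 0 - 1 :: ('b, 'a) dpoly)"
    by (simp add: dmap_diff)
  have r: "dsym ?x 0 - 1 \<in> dideal scale (\<lambda>x. x)" using rel0[of "\<lambda>x. x" ?x scale] by simp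
  have "mon M * (dsym ?x 0 - 1) \<in> dhom (dweight M + 0)"
    by (rule dhom_mult[OF mon_dhom dhom_diff[OF dsym_dhom dhom_one]]) (rule refl)
  then have h: "mon M * (dsym ?x 0 - 1) \<in> dhom n" using w by simp
  show ?thesis unfolding e by (rule W_ideal[OF Xh ideal_multL[OF r] h])
qed

lemma rc_prod:
  assumes w: "dweight M + (i + j) = n"
  shows "mon M * dmap (sec N) (dsym (coset N x) i * dsym (coset N x) j
           - of_nat ((i + j) choose i) * dsym (coset N x) (i + j)) \<in> WK"
proof -
  let ?x = "sec N (coset N x)"
  have e: "dmap (sec N) (dsym (coset N x) i * dsym (coset N x) j
           - of_nat ((i + j) choose i) * dsym (coset N x) (i + j))
       = (dsym ?x i * dsym ?x j - of_nat ((i + j) choose i) * dsym ?x (i + j) :: ('b, 'a) dpoly)"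
    by (simp add: dmap_diff dmap_mult)
  have r: "dsym ?x i * dsym ?x j - of_nat ((i + j) choose i) * dsym ?x (i + j) \<in> dideal scale (\<lambda>x. x)"
    using rel_prod[of "\<lambda>x. x" ?x i j scale] by simp
  have "(dsym ?x i * dsym ?x j - of_nat ((i + j) choose i) * dsym ?x (i + j) :: ('b, 'a) dpoly) \<in> dhom (i + j)"
    by (rule dhom_diff[OF dhom_mult[OF dsym_dhom dsym_dhom] dhom_of_nat_mult[OF dsym_dhom]])
  then have "(mon M :: ('b, 'a) dpoly) * (dsym ?x i * dsym ?x j - of_nat ((i + j) choose i) * dsym ?x (i + j)) \<in> dhom (dweight M + (i + j))"
    by (rule dhom_mult[OF mon_dhom[OF refl]])
  then have h: "(mon M :: ('b, 'a) dpoly) * (dsym ?x i * dsym ?x j - of_nat ((i + j) choose i) * dsym ?x (i + j)) \<in> dhom n"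
    using w by simp
  show ?thesis unfolding e by (rule W_ideal[OF Xh ideal_multL[OF r] h])
qed

lemma rc_scale:
  assumes w: "dweight M + k = n"
  shows "mon M * dmap (sec N) (dsym (coset N (scale c x)) k - dconst (c ^ k) * dsym (coset N x) k) \<in> WK"
proof -
  let ?x = "sec N (coset N x)" and ?y = "sec N (coset N (scale c x))"
  let ?M = "mon M :: ('b, 'a) dpoly"
  have e: "dmap (sec N) (dsym (coset N (scale c x)) k - dconst (c ^ k) * dsym (coset N x) k)
       = (dsym ?y k - dconst (c ^ k) * dsym ?x k :: ('b, 'a) dpoly)"
    by (simp add: dmap_diff dmap_mult)
  have T1: "(dsym ?y k - dsym (scale c x) k) * ?M \<in> WK"
    by (rule Key'[OF hdiff w])
  have r: "dsym (scale c x) k - dconst (c ^ k) * dsym x k \<in> dideal scale (\<lambda>x. x)"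
    using rel_scale[of "\<lambda>x. x" scale c x k] by simp
  have "(dsym (scale c x) k - dconst (c ^ k) * dsym x k :: ('b, 'a) dpoly) \<in> dhom k"
    by (rule dhom_diff[OF dsym_dhom dhom_dconst_mult[OF dsym_dhom]])
  then have "?M * (dsym (scale c x) k - dconst (c ^ k) * dsym x k) \<in> dhom (dweight M + k)"
    by (rule dhom_mult[OF mon_dhom[OF refl]])
  then have "?M * (dsym (scale c x) k - dconst (c ^ k) * dsym x k) \<in> dhom n" using w by simp
  then have T2: "?M * (dsym (scale c x) k - dconst (c ^ k) * dsym x k) \<in> WK"
    by (rule W_ideal[OF Xh ideal_multL[OF r]])
  have T3: "dscale (c ^ k) (- ((dsym ?x k - dsym x k) * ?M)) \<in> WK"
    by (rule W_scale[OF Xh W_neg[OF Xh Key'[OF hdiff w]]])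
  have "(dsym ?y k - dsym (scale c x) k) * ?M + ?M * (dsym (scale c x) k - dconst (c ^ k) * dsym x k)
        + dscale (c ^ k) (- ((dsym ?x k - dsym x k) * ?M)) \<in> WK"
    by (rule W_add[OF Xh W_add[OF Xh T1 T2] T3])
  moreover have "(dsym ?y k - dsym (scale c x) k) * ?M + ?M * (dsym (scale c x) k - dconst (c ^ k) * dsym x k)
        + dscale (c ^ k) (- ((dsym ?x k - dsym x k) * ?M)) = ?M * (dsym ?y k - dconst (c ^ k) * dsym ?x k)"
    by (simp add: dscale_def algebra_simps)
  ultimately show ?thesis unfolding e by simp
qed


lemma rc_sum:
  assumes w: "dweight M + k = n"
  shows "mon M * dmap (sec N) (dsym (coset N (x + y)) k
           - (\<Sum>i\<le>k. dsym (coset N x) i * dsym (coset N y) (k - i))) \<in> WK"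
proof -
  let ?x = "sec N (coset N x)" and ?y = "sec N (coset N y)" and ?z = "sec N (coset N (x + y))"
  let ?M = "mon M :: ('b, 'a) dpoly"
  have e: "dmap (sec N) (dsym (coset N (x + y)) k - (\<Sum>i\<le>k. dsym (coset N x) i * dsym (coset N y) (k - i)))
       = (dsym ?z k - (\<Sum>i\<le>k. dsym ?x i * dsym ?y (k - i)) :: ('b, 'a) dpoly)"
    by (simp add: dmap_diff dmap_sum dmap_mult)
  have T1: "(dsym ?z k - dsym (x + y) k) * ?M \<in> WK"
    by (rule Key'[OF hdiff w])
  have r: "dsym (x + y) k - (\<Sum>i\<le>k. dsym x i * dsym y (k - i)) \<in> dideal scale (\<lambda>x. x)"
    using rel_sum[of "\<lambda>x. x" x y k scale] by simp
  have "(dsym (x + y) k - (\<Sum>i\<le>k. dsym x i * dsym y (k - i)) :: ('b, 'a) dpoly) \<in> dhom k"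
  proof (rule dhom_diff[OF dsym_dhom dhom_sum])
    fix i assume "i \<in> {..k}"
    then have "i + (k - i) = k" by simp
    moreover have "(dsym x i * dsym y (k - i) :: ('b, 'a) dpoly) \<in> dhom (i + (k - i))"
      by (rule dhom_mult[OF dsym_dhom dsym_dhom])
    ultimately show "(dsym x i * dsym y (k - i) :: ('b, 'a) dpoly) \<in> dhom k" by simp
  qed
  then have "?M * (dsym (x + y) k - (\<Sum>i\<le>k. dsym x i * dsym y (k - i))) \<in> dhom (dweight M + k)"
    by (rule dhom_mult[OF mon_dhom[OF refl]])
  then have "?M * (dsym (x + y) k - (\<Sum>i\<le>k. dsym x i * dsym y (k - i))) \<in> dhom n" using w by simp
  then have T2: "?M * (dsym (x + y) k - (\<Sum>i\<le>k. dsym x i * dsym y (k - i))) \<in> WK"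
    by (rule W_ideal[OF Xh ideal_multL[OF r]])
  let ?t = "\<lambda>i. (dsym ?x i - dsym x i) * (mon (add_mset (?y, k - i) M) :: ('b, 'a) dpoly)
               + (dsym ?y (k - i) - dsym y (k - i)) * mon (add_mset (x, i) M)"
  have T3: "(\<Sum>i\<le>k. ?t i) \<in> WK"
  proof (rule W_sum[OF Xh])
    fix i assume i: "i \<in> {..k}"
    have w1: "dweight (add_mset (?y, k - i) M) + i = n" using w i by simp
    have w2: "dweight (add_mset (x, i) M) + (k - i) = n" using w i by simp
    show "?t i \<in> WK"
      by (rule W_add[OF Xh Key'[OF hdiff w1] Key'[OF hdiff w2]])
  qed
  have t_eq: "?t i = (dsym ?x i * dsym ?y (k - i) - dsym x i * dsym y (k - i)) * ?M" for i
    by (simp add: mon_add_mset algebra_simps)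
  have "(\<Sum>i\<le>k. ?t i) = (\<Sum>i\<le>k. dsym ?x i * dsym ?y (k - i)) * ?M - (\<Sum>i\<le>k. dsym x i * dsym y (k - i)) * ?M"
    unfolding t_eq by (simp add: sum_distrib_right sum_subtractf left_diff_distrib)
  then have "(dsym ?z k - dsym (x + y) k) * ?M + ?M * (dsym (x + y) k - (\<Sum>i\<le>k. dsym x i * dsym y (k - i)))
       - (\<Sum>i\<le>k. ?t i) = ?M * (dsym ?z k - (\<Sum>i\<le>k. dsym ?x i * dsym ?y (k - i)))"
    by (simp add: algebra_simps)
  moreover have "(dsym ?z k - dsym (x + y) k) * ?M + ?M * (dsym (x + y) k - (\<Sum>i\<le>k. dsym x i * dsym y (k - i)))
       - (\<Sum>i\<le>k. ?t i) \<in> WK"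
    by (rule W_diff[OF Xh W_add[OF Xh T1 T2] T3])
  ultimately show ?thesis unfolding e by simp
qed

end


lemma single_mult_dscale: "Poly_Mapping.single m c * X = dscale c (mon m * X)"
  by (simp add: dscale_def dconst_def mult.assoc[symmetric] mult_single)

context
  fixes scale :: "'a::comm_ring_1 \<Rightarrow> 'b::ab_group_add \<Rightarrow> 'b" and n :: nat and N :: "'b set"
  assumes n1: "n \<ge> 1" and unit: "(of_nat (fact (n - 1)) :: 'a) dvd 1"
    and M: "Modules.module scale" and NS: "Modules.module.subspace scale N"
begin

lemma RelCase:
  assumes r: "r \<in> drels scale (coset N)"
  shows "\<exists>d. r \<in> dhom d \<and> (\<forall>M. dweight M + d = n \<longrightarrow> (mon M :: ('b, 'a) dpoly) * dmap (sec N) r \<in> W scale n (Kset n N))"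
  using r unfolding drels_def
proof (elim UnE CollectE exE conjE)
  fix x assume e: "r = dsym (coset N x) 0 - 1"
  show ?thesis unfolding e
    by (intro exI[of _ 0] conjI allI impI dhom_diff dsym_dhom dhom_one rc0[OF n1 unit M NS]) simp
next
  fix c x k assume e: "r = dsym (coset N (scale c x)) k - dconst (c ^ k) * dsym (coset N x) k"
  show ?thesis unfolding e
    by (intro exI[of _ k] conjI allI impI dhom_diff dsym_dhom dhom_dconst_mult rc_scale[OF n1 unit M NS])
next
  fix x i j assume e: "r = dsym (coset N x) i * dsym (coset N x) j - of_nat ((i + j) choose i) * dsym (coset N x) (i + j)"
  show ?thesis unfolding e
    by (intro exI[of _ "i + j"] conjI allI impI dhom_diff dhom_mult dsym_dhom dhom_of_nat_mult rc_prod[OF n1 unit M NS])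
next
  fix x y k assume e: "r = dsym (coset N (x + y)) k - (\<Sum>i\<le>k. dsym (coset N x) i * dsym (coset N y) (k - i))"
  have "(\<Sum>i\<le>k. dsym (coset N x) i * dsym (coset N y) (k - i) :: ('b set, 'a) dpoly) \<in> dhom k"
  proof (rule dhom_sum)
    fix i assume "i \<in> {..k}"
    then have "i + (k - i) = k" by simp
    moreover have "(dsym (coset N x) i * dsym (coset N y) (k - i) :: ('b set, 'a) dpoly) \<in> dhom (i + (k - i))"
      by (rule dhom_mult[OF dsym_dhom dsym_dhom])
    ultimately show "(dsym (coset N x) i * dsym (coset N y) (k - i) :: ('b set, 'a) dpoly) \<in> dhom k" by simp
  qed
  then show ?thesis unfolding e
    by (intro exI[of _ k] conjI allI impI dhom_diff dsym_dhom rc_sum[OF n1 unit M NS])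
qed

lemma base:
  assumes r: "r \<in> drels scale (coset N)"
  shows "dmap (sec N) (proj n (p * r)) \<in> W scale n (Kset n N)"
proof -
  have Xh: "(Kset n N :: ('b, 'a) dpoly set) \<subseteq> dhom n" by (rule Kset_dhom)
  obtain d where d: "r \<in> dhom d"
    and R: "\<And>M. dweight M + d = n \<Longrightarrow> (mon M :: ('b, 'a) dpoly) * dmap (sec N) r \<in> W scale n (Kset n N)"
    using RelCase[OF r] by blast
  have ep: "p = (\<Sum>m\<in>Poly_Mapping.keys p. Poly_Mapping.single m (Poly_Mapping.lookup p m))"
    by (rule poly_expand)
  have "p * r = (\<Sum>m\<in>Poly_Mapping.keys p. Poly_Mapping.single m (Poly_Mapping.lookup p m)) * r"
    using ep by (rule arg_cong[where f="\<lambda>t. t * r"])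
  also have "\<dots> = (\<Sum>m\<in>Poly_Mapping.keys p. Poly_Mapping.single m (Poly_Mapping.lookup p m) * r)"
    by (rule sum_distrib_right)
  finally have pr: "p * r = \<dots>" .
  show ?thesis unfolding pr proj_sum dmap_sum
  proof (rule W_sum[OF Xh])
    fix m assume "m \<in> Poly_Mapping.keys p"
    let ?c = "Poly_Mapping.lookup p m"
    have h: "Poly_Mapping.single m ?c * r \<in> dhom (dweight m + d)"
      by (rule dhom_mult[OF mon_dhom[OF refl] d])
    show "dmap (sec N) (proj n (Poly_Mapping.single m ?c * r)) \<in> W scale n (Kset n N)"
    proof (cases "dweight m + d = n")
      case True
      have "dmap (sec N) (proj n (Poly_Mapping.single m ?c * r))
          = dscale ?c (mon (imk (sec N) m) * dmap (sec N) r)"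
        unfolding proj_same[OF h[unfolded True]] dmap_mult dmap_single by (rule single_mult_dscale)
      moreover have "(mon (imk (sec N) m) :: ('b, 'a) dpoly) * dmap (sec N) r \<in> W scale n (Kset n N)"
        by (rule R) (simp add: True)
      ultimately show ?thesis using W_scale[OF Xh, where scale=scale] by simp
    next
      case False
      then have "proj n (Poly_Mapping.single m ?c * r) = 0" by (rule proj_other[OF h])
      then show ?thesis by (simp add: W_zero[OF Xh])
    qed
  qed
qed

lemma ideal_part:
  assumes w: "w \<in> dideal scale (coset N)"
  shows "\<forall>p. dmap (sec N) (proj n (p * w)) \<in> W scale n (Kset n N)"
proof -
  have Xh: "(Kset n N :: ('b, 'a) dpoly set) \<subseteq> dhom n" by (rule Kset_dhom)
  interpret R: Modules.module "(*) :: ('b set, 'a) dpoly \<Rightarrow> _ \<Rightarrow> _" by (rule module_mult)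
  show ?thesis
    using w unfolding dideal_def
  proof (induction rule: R.span_induct)
    case base
    show ?case
    proof (rule R.subspaceI)
      show "0 \<in> {w. \<forall>p. dmap (sec N) (proj n (p * w)) \<in> W scale n (Kset n N)}"
        by (simp add: W_zero[OF Xh])
    next
      fix x y assume "x \<in> {w. \<forall>p. dmap (sec N) (proj n (p * w)) \<in> W scale n (Kset n N)}"
        "y \<in> {w. \<forall>p. dmap (sec N) (proj n (p * w)) \<in> W scale n (Kset n N)}"
      then show "x + y \<in> {w. \<forall>p. dmap (sec N) (proj n (p * w)) \<in> W scale n (Kset n N)}"
        by (simp add: distrib_left proj_add dmap_add W_add[OF Xh])
    next
      fix c x assume "x \<in> {w. \<forall>p. dmap (sec N) (proj n (p * w)) \<in> W scale n (Kset n N)}"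
      then show "c * x \<in> {w. \<forall>p. dmap (sec N) (proj n (p * w)) \<in> W scale n (Kset n N)}"
        by (simp add: mult.assoc[symmetric])
    qed
  next
    case (step r)
    then show ?case using base by blast
  qed
qed

lemma step1:
  assumes u: "u \<in> dhom n"
  shows "u - dmap (sec N \<circ> coset N) u \<in> W scale n (Kset n N)"
proof -
  have Xh: "(Kset n N :: ('b, 'a) dpoly set) \<subseteq> dhom n" by (rule Kset_dhom)
  let ?h = "sec N \<circ> coset N"
  interpret D: Modules.module "dscale :: 'a \<Rightarrow> ('b, 'a) dpoly \<Rightarrow> _" by (rule module_dscale)
  show ?thesis
    using u unfolding dhom_def
  proof (induction rule: D.span_induct)
    case base
    show ?case
    proof (rule D.subspaceI)
      show "0 \<in> {u. u - dmap ?h u \<in> W scale n (Kset n N)}"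
        using W_zero[OF Xh, where scale=scale] by simp
    next
      fix x y assume ax: "x \<in> {u. u - dmap ?h u \<in> W scale n (Kset n N)}"
        and ay: "y \<in> {u. u - dmap ?h u \<in> W scale n (Kset n N)}"
      from ax have ax': "x - dmap ?h x \<in> W scale n (Kset n N)" by (rule CollectD)
      from ay have ay': "y - dmap ?h y \<in> W scale n (Kset n N)" by (rule CollectD)
      have e: "x + y - dmap ?h (x + y) = (x - dmap ?h x) + (y - dmap ?h y)"
        unfolding dmap_add by (rule add_diff_add)
      show "x + y \<in> {u. u - dmap ?h u \<in> W scale n (Kset n N)}"
        unfolding mem_Collect_eq e by (rule W_add[OF Xh ax' ay'])
    next
      fix c x assume ax: "x \<in> {u. u - dmap ?h u \<in> W scale n (Kset n N)}"
      from ax have ax': "x - dmap ?h x \<in> W scale n (Kset n N)" by (rule CollectD)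
      have e: "dscale c x - dmap ?h (dscale c x) = dscale c (x - dmap ?h x)"
        unfolding dmap_dscale by (rule D.scale_right_diff_distrib[symmetric])
      show "dscale c x \<in> {u. u - dmap ?h u \<in> W scale n (Kset n N)}"
        unfolding mem_Collect_eq e by (rule W_scale[OF Xh ax'])
    qed
  next
    case (step v)
    then obtain m where v: "v = mon m" and wm: "dweight m = n" by blast
    have "mon ({#} + imk ?h m) - mon ({#} + m) \<in> W scale n (Kset n N)"
    proof (rule tele[OF Xh, of "\<lambda>_. True"])
      fix x i and M' :: "('b \<times> nat) multiset"
      assume wi: "dweight M' + i = n"
      have "(dsym (sec N (coset N x)) i - dsym x i) * mon M' \<in> W scale n (Kset n N)"
        by (rule Key'[OF n1 unit M NS hdiff[OF n1 unit M NS] wi])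
      then show "(dsym (?h x) i - dsym x i) * mon M' \<in> W scale n (Kset n N)"
        by (simp only: comp_apply)
    qed (use wm in auto)
    then have "mon (imk ?h m) - mon m \<in> W scale n (Kset n N)" by simp
    from W_neg[OF Xh this] show ?case by (simp add: v comp_def)
  qed
qed

end


lemma dmap_ideal:
  fixes scale :: "'a::comm_ring_1 \<Rightarrow> 'b::ab_group_add \<Rightarrow> 'b"
  assumes b: "b \<in> dideal scale (\<lambda>x. x)"
  shows "dmap q b \<in> dideal scale q"
proof -
  interpret R: Modules.module "(*) :: ('b, 'a) dpoly \<Rightarrow> _ \<Rightarrow> _" by (rule module_mult)
  show ?thesis
    using b unfolding dideal_def[of scale "\<lambda>x. x"]
  proof (induction rule: R.span_induct)
    case base
    show ?case
    proof (rule R.subspaceI)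
      show "0 \<in> {b. dmap q b \<in> dideal scale q}" by (simp add: ideal_zero)
    next
      fix x y :: "('b, 'a) dpoly" assume "x \<in> {b. dmap q b \<in> dideal scale q}" "y \<in> {b. dmap q b \<in> dideal scale q}"
      then show "x + y \<in> {b. dmap q b \<in> dideal scale q}" by (simp add: dmap_add ideal_add)
    next
      fix c x :: "('b, 'a) dpoly" assume "x \<in> {b. dmap q b \<in> dideal scale q}"
      then show "c * x \<in> {b. dmap q b \<in> dideal scale q}" by (simp add: dmap_mult ideal_multL)
    qed
  next
    case (step r)
    then show ?case unfolding drels_def
    proof (elim UnE CollectE exE conjE)
      fix x assume "r = dsym ((\<lambda>x. x) x) 0 - 1"
      then show ?thesis by (simp add: dmap_diff rel0)
    next
      fix c x k assume "r = dsym ((\<lambda>x. x) (scale c x)) k - dconst (c ^ k) * dsym ((\<lambda>x. x) x) k"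
      then show ?thesis by (simp add: dmap_diff dmap_mult rel_scale)
    next
      fix x i j assume "r = dsym ((\<lambda>x. x) x) i * dsym ((\<lambda>x. x) x) j - of_nat ((i + j) choose i) * dsym ((\<lambda>x. x) x) (i + j)"
      then show ?thesis by (simp add: dmap_diff dmap_mult rel_prod)
    next
      fix x y k assume "r = dsym ((\<lambda>x. x) (x + y)) k - (\<Sum>i\<le>k. dsym ((\<lambda>x. x) x) i * dsym ((\<lambda>x. x) y) (k - i))"
      then show ?thesis by (simp add: dmap_diff dmap_mult dmap_sum rel_sum)
    qed
  qed
qed

lemma dmap_K:
  fixes scale :: "'a::comm_ring_1 \<Rightarrow> 'b::ab_group_add \<Rightarrow> 'b"
  assumes M: "Modules.module scale" and NS: "Modules.module.subspace scale N"
    and a: "a \<in> Modules.module.span dscale (Kset n N :: ('b, 'a) dpoly set)"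
  shows "dmap (coset N) a = 0"
proof -
  interpret D: Modules.module "dscale :: 'a \<Rightarrow> ('b, 'a) dpoly \<Rightarrow> _" by (rule module_dscale)
  show ?thesis
    using a
  proof (induction rule: D.span_induct)
    case base
    show ?case
    proof (rule D.subspaceI)
      show "0 \<in> {a. dmap (coset N) a = 0}" by simp
    next
      fix x y :: "('b, 'a) dpoly" assume "x \<in> {a. dmap (coset N) a = 0}" "y \<in> {a. dmap (coset N) a = 0}"
      then show "x + y \<in> {a. dmap (coset N) a = 0}" by (simp add: dmap_add)
    next
      fix c :: 'a and x :: "('b, 'a) dpoly" assume "x \<in> {a. dmap (coset N) a = 0}"
      then show "dscale c x \<in> {a. dmap (coset N) a = 0}" by (simp add: dmap_mult dscale_def)
    qed
  next
    case (step r)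
    then obtain x y where r: "r = dsym (x + y) n - dsym x n" and y: "y \<in> N"
      unfolding Kset_def by blast
    show ?case unfolding r by (simp add: dmap_diff coset_eq[OF M NS y])
  qed
qed

theorem lemma6p1:
  fixes scale :: "'a::comm_ring_1 \<Rightarrow> 'b::ab_group_add \<Rightarrow> 'b"
    and n :: nat
  assumes "n \<ge> 1"
    and "(of_nat (fact (n - 1)) :: 'a) dvd 1"
    and "Modules.module scale"
  shows "dhom n \<subseteq>
           {a + b | a b. a \<in> Modules.module.span dscale {dsym x n | x. True}
                        \<and> b \<in> dideal scale (\<lambda>x. x) \<inter> dhom n}
       \<and> (\<forall>N. Modules.module.subspace scale N \<longrightarrow>
         {u \<in> dhom n. dmap (coset N) u \<in> dideal scale (coset N)} =
           {a + b | a b. a \<in> Modules.module.span dscale {dsym (x + y) n - dsym x n | x y. y \<in> N}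
                        \<and> b \<in> dideal scale (\<lambda>x. x) \<inter> dhom n})"
proof -
  note n1 = assms(1) and unit = assms(2) and M = assms(3)
  have P1: "dhom n \<subseteq> W scale n (Vset n)"
    unfolding dhom_def
  proof (rule module.span_minimal[OF module_dscale])
    show "{mon m |m. dweight m = n} \<subseteq> W scale n (Vset n)"
      using mon_V[OF n1 unit] by blast
    show "Modules.module.subspace dscale (W scale n (Vset n))"
      by (rule W_subspace[OF Vset_dhom])
  qed
  have P2: "{u \<in> dhom n. dmap (coset N) u \<in> dideal scale (coset N)} = W scale n (Kset n N)"
    if NS: "Modules.module.subspace scale N" for N
  proof
    have Xh: "(Kset n N :: ('b, 'a) dpoly set) \<subseteq> dhom n" by (rule Kset_dhom)
    show "{u \<in> dhom n. dmap (coset N) u \<in> dideal scale (coset N)} \<subseteq> W scale n (Kset n N)"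
    proof
      fix u assume "u \<in> {u \<in> dhom n. dmap (coset N) u \<in> dideal scale (coset N)}"
      then have u: "u \<in> dhom n" and du: "dmap (coset N) u \<in> dideal scale (coset N)" by auto
      have A: "u - dmap (sec N \<circ> coset N) u \<in> W scale n (Kset n N)"
        by (rule step1[OF n1 unit M NS u])
      have "dmap (sec N) (proj n (1 * dmap (coset N) u)) \<in> W scale n (Kset n N)"
        using ideal_part[OF n1 unit M NS du] by blast
      moreover have "proj n (1 * dmap (coset N) u) = dmap (coset N) u"
        using proj_same[OF dmap_dhom[OF u]] by simp
      ultimately have B: "dmap (sec N \<circ> coset N) u \<in> W scale n (Kset n N)"
        by (simp add: dmap_comp)
      from W_add[OF Xh A B] show "u \<in> W scale n (Kset n N)" by simp
    qed
    show "W scale n (Kset n N) \<subseteq> {u \<in> dhom n. dmap (coset N) u \<in> dideal scale (coset N)}"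
    proof
      fix u assume uW: "u \<in> W scale n (Kset n N)"
      then obtain a b where u: "u = a + b" and a: "a \<in> Modules.module.span dscale (Kset n N)"
        and b: "b \<in> dideal scale (\<lambda>x. x)" unfolding W_def by blast
      have "dmap (coset N) u = dmap (coset N) b"
        unfolding u dmap_add dmap_K[OF M NS a] by simp
      then have "dmap (coset N) u \<in> dideal scale (coset N)"
        using dmap_ideal[OF b] by simp
      then show "u \<in> {u \<in> dhom n. dmap (coset N) u \<in> dideal scale (coset N)}"
        using W_dhom[OF Xh uW] by simp
    qed
  qed
  show ?thesis
    using P1 P2 unfolding W_def Vset_def Kset_def by blast
qed


end
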